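(* A mixed graph $G=(V,D,B)$ is HTC-infinite-to-one if and only if the maximum flow in the network $G_{\mathrm{flow}}$ defined below has size strictly less than $|D|=\sum_{v\in V}|\mathrm{pa}(v)|$.
   Context: A mixed graph is $G=(V,D,B)$ with $V=[m]$, $D$ directed edges $v\to w$, $B$ symmetric bidirected edges $v\leftrightarrow w$, no self-loops. $\mathrm{pa}(v)=\{w:w\to v\in D\}$, $\mathrm{sib}(v)=\{w:w\leftrightarrow v\in B\}$. A half-trek from $y$ to $w$ is a path $y\leftrightarrow w_0\to w_1\to\cdots\to w_r=w$ (left side $\{y\}$, right side $\{w_0,\dots,w_r\}$) or $y\to w_1\to\cdots\to w_r=w$, $r\ge0$ (left side $\{y\}$, right side $\{y,w_1,\dots,w_r\}$); nodes may repeat. A system of half-treks from $X$ to $Y$: half-treks with distinct sources forming $X$ and distinct targets forming $Y$; no sided intersection: pairwise disjoint left sides and pairwise disjoint right sides. $Y$ satisfies the half-trek criterion w.r.t. $v$ if $|Y|=|\mathrm{pa}(v)|$, $Y\cap(\{v\}\cup\mathrm{sib}(v))=\emptyset$, and there is a system of half-treks with no sided intersection from $Y$ to $\mathrm{pa}(v)$. $G$ is HTC-infinite-to-one if every family $(Y_v:v\in V)$ of subsets of $V$ either contains some $Y_v$ that fails the half-trek criterion w.r.t. $v$ or contains a pair $Y_v,Y_w$ with $v\in Y_w$ and $w\in Y_v$. Flows: in a directed graph with source $s$, sink $t$, node and edge capacities, a flow is a nonnegative edge function respecting edge capacities and, at each node $x\neq s,t$, conservation $\sum_u f(u,x)=\sum_w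 f(x,w)$ with this value at most the node capacity; its size is the total flow out of $s$. The network $G_{\mathrm{flow}}$ has nodes $s,t$, a node $L\{v,w\}$ for each unordered pair of distinct $v,w\in V$ with $v\leftrightarrow w\notin B$, and a node $R_v(w)$ for each $(v,w)\in V\times V$. Its edges are: $s\to L\{v,w\}$, $L\{v,w\}\to R_v(w)$ (and, by symmetry of the unordered pair, $L\{v,w\}\to R_w(v)$) for each such pair; $L\{v,w\}\to R_v(u)$ for all $v\ne w$ with $v\leftrightarrow w\notin B$ and $w\leftrightarrow u\in B$; $R_v(w)\to R_v(u)$ for all $v\in V$ and $w\to u\in D$; and $R_v(w)\to t$ for all $v\in V$, $w\in\mathrm{pa}(v)$. All edges and the nodes $s,t$ have capacity $\infty$; all other nodes have capacity $1$. *)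

theory Defs
  imports Complex_Main
begin

text \<open>Mixed graph on V = {0..<m} (a relabelling of [m]) with directed edges D
  (pairs (v,w) meaning v -> w) and bidirected edges B (symmetric).\<close>

definition mixed_graph :: "nat \<Rightarrow> (nat \<times> nat) set \<Rightarrow> (nat \<times> nat) set \<Rightarrow> bool" where
  "mixed_graph m D B \<longleftrightarrow>
     D \<subseteq> {..<m} \<times> {..<m} \<and> B \<subseteq> {..<m} \<times> {..<m} \<and> sym B \<and>
     (\<forall>v. (v, v) \<notin> D) \<and> (\<forall>v. (v, v) \<notin> B)"

definition pa :: "(nat \<times> nat) set \<Rightarrow> nat \<Rightarrow> nat set" where
  "pa D v = {w. (w, v) \<in> D}"

definition sib :: "(nat \<times> nat) set \<Rightarrow> nat \<Rightarrow> nat set" where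
  "sib B v = {w. (w, v) \<in> B}"

text \<open>A half-trek is encoded as (b, y, p): y is the source, p = [w_0,...,w_r] is a
  directed walk (nodes may repeat). If b, the half-trek is y <-> w_0 -> ... -> w_r;
  otherwise w_0 = y and it is y -> w_1 -> ... -> w_r.\<close>

type_synonym half_trek = "bool \<times> nat \<times> nat list"

definition is_half_trek :: "(nat \<times> nat) set \<Rightarrow> (nat \<times> nat) set \<Rightarrow> half_trek \<Rightarrow> bool" where
  "is_half_trek D B h \<longleftrightarrow> (case h of (b, y, p) \<Rightarrow>
     p \<noteq> [] \<and> successively (\<lambda>a c. (a, c) \<in> D) p \<and>
     (if b then (y, hd p) \<in> B else hd p = y))"

definition ht_source :: "half_trek \<Rightarrow> nat" where
  "ht_source h = fst (snd h)"

definition ht_target :: "half_trek \<Rightarrow> nat" where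
  "ht_target h = last (snd (snd h))"

definition ht_left :: "half_trek \<Rightarrow> nat set" where
  "ht_left h = {fst (snd h)}"

definition ht_right :: "half_trek \<Rightarrow> nat set" where
  "ht_right h = set (snd (snd h))"

definition ht_system_no_sided :: "(nat \<times> nat) set \<Rightarrow> (nat \<times> nat) set \<Rightarrow> nat set \<Rightarrow> nat set \<Rightarrow> bool" where
  "ht_system_no_sided D B X Y \<longleftrightarrow> (\<exists>hs :: half_trek list.
     (\<forall>h \<in> set hs. is_half_trek D B h) \<and>
     distinct (map ht_source hs) \<and> distinct (map ht_target hs) \<and>
     set (map ht_source hs) = X \<and> set (map ht_target hs) = Y \<and>
     (\<forall>i < length hs. \<forall>j < length hs. i \<noteq> j \<longrightarrow>
        ht_left (hs ! i) \<inter> ht_left (hs ! j) = {} \<and>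
        ht_right (hs ! i) \<inter> ht_right (hs ! j) = {}))"

definition HTC :: "(nat \<times> nat) set \<Rightarrow> (nat \<times> nat) set \<Rightarrow> nat set \<Rightarrow> nat \<Rightarrow> bool" where
  "HTC D B Y v \<longleftrightarrow> card Y = card (pa D v) \<and> Y \<inter> ({v} \<union> sib B v) = {} \<and>
     ht_system_no_sided D B Y (pa D v)"

definition HTC_infinite_to_one :: "nat \<Rightarrow> (nat \<times> nat) set \<Rightarrow> (nat \<times> nat) set \<Rightarrow> bool" where
  "HTC_infinite_to_one m D B \<longleftrightarrow>
     (\<forall>Yf :: nat \<Rightarrow> nat set. (\<forall>v < m. Yf v \<subseteq> {..<m}) \<longrightarrow>
        (\<exists>v < m. \<not> HTC D B (Yf v) v) \<or>
        (\<exists>v < m. \<exists>w < m. v \<noteq> w \<and> v \<in> Yf w \<and> w \<in> Yf v))"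

text \<open>The flow network G_flow.  L-nodes are indexed by the unordered pair {v,w}.\<close>
datatype fnode = Src | Snk | Lnd "nat set" | Rnd nat nat

definition flow_nodes :: "nat \<Rightarrow> (nat \<times> nat) set \<Rightarrow> fnode set" where
  "flow_nodes m B = {Src, Snk} \<union>
     {Lnd {v, w} | v w. v < m \<and> w < m \<and> v \<noteq> w \<and> (v, w) \<notin> B} \<union>
     {Rnd v w | v w. v < m \<and> w < m}"

definition flow_edges :: "nat \<Rightarrow> (nat \<times> nat) set \<Rightarrow> (nat \<times> nat) set \<Rightarrow> (fnode \<times> fnode) set" where
  "flow_edges m D B =
     {(Src, Lnd {v, w}) | v w. v < m \<and> w < m \<and> v \<noteq> w \<and> (v, w) \<notin> B} \<union>
     {(Lnd {v, w}, Rnd v w) | v w. v < m \<and> w < m \<and> v \<noteq> w \<and> (v, w) \<notin> B} \<union>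
     {(Lnd {v, w}, Rnd v u) | v w u. v < m \<and> w < m \<and> v \<noteq> w \<and> (v, w) \<notin> B \<and> (w, u) \<in> B} \<union>
     {(Rnd v w, Rnd v u) | v w u. v < m \<and> (w, u) \<in> D} \<union>
     {(Rnd v w, Snk) | v w. v < m \<and> w \<in> pa D v}"

text \<open>A flow: nonnegative, supported on the edges (edge capacities are infinite),
  conservation at every node other than s,t, with throughput at most the node capacity 1.\<close>
definition is_flow :: "nat \<Rightarrow> (nat \<times> nat) set \<Rightarrow> (nat \<times> nat) set \<Rightarrow> (fnode \<times> fnode \<Rightarrow> real) \<Rightarrow> bool" where
  "is_flow m D B f \<longleftrightarrow>
     (\<forall>e. 0 \<le> f e) \<and> (\<forall>e. e \<notin> flow_edges m D B \<longrightarrow> f e = 0) \<and>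
     (\<forall>x \<in> flow_nodes m B - {Src, Snk}.
        (\<Sum>u \<in> flow_nodes m B. f (u, x)) = (\<Sum>w \<in> flow_nodes m B. f (x, w)) \<and>
        (\<Sum>u \<in> flow_nodes m B. f (u, x)) \<le> 1)"

definition flow_size :: "nat \<Rightarrow> (nat \<times> nat) set \<Rightarrow> (fnode \<times> fnode \<Rightarrow> real) \<Rightarrow> real" where
  "flow_size m B f = (\<Sum>w \<in> flow_nodes m B. f (Src, w))"

definition max_flow :: "nat \<Rightarrow> (nat \<times> nat) set \<Rightarrow> (nat \<times> nat) set \<Rightarrow> real" where
  "max_flow m D B = Sup {flow_size m B f | f. is_flow m D B f}"

end

theory Submission
  imports Defs "HOL-Library.Transitive_Closure_Table"
begin

definition inF :: "'v set \<Rightarrow> ('v \<times> 'v \<Rightarrow> real) \<Rightarrow> 'v \<Rightarrow> real" where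
  "inF V f x = (\<Sum>u\<in>V. f (u, x))"
definition outF :: "'v set \<Rightarrow> ('v \<times> 'v \<Rightarrow> real) \<Rightarrow> 'v \<Rightarrow> real" where
  "outF V f x = (\<Sum>w\<in>V. f (x, w))"
definition cflow :: "'v set \<Rightarrow> ('v \<times> 'v) set \<Rightarrow> 'v \<Rightarrow> 'v \<Rightarrow> ('v \<times> 'v \<Rightarrow> real) \<Rightarrow> bool" where
  "cflow V A s t f \<longleftrightarrow> (\<forall>a. 0 \<le> f a) \<and> (\<forall>a. a \<notin> A \<longrightarrow> f a = 0) \<and>
     (\<forall>x\<in>V-{s,t}. inF V f x = outF V f x)"
definition fval :: "'v set \<Rightarrow> 'v \<Rightarrow> ('v \<times> 'v \<Rightarrow> real) \<Rightarrow> real" where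
  "fval V s f = outF V f s - inF V f s"

definition stp :: "('v \<Rightarrow> 'v \<Rightarrow> bool) \<Rightarrow> 'v \<Rightarrow> 'v \<Rightarrow> 'v \<times> 'v \<Rightarrow> real" where
  "stp c x y a = (if c x y then (if a = (x,y) then 1 else 0) else (if a = (y,x) then -1 else 0))"

fun wk :: "('v \<Rightarrow> 'v \<Rightarrow> bool) \<Rightarrow> 'v \<Rightarrow> 'v list \<Rightarrow> 'v \<times> 'v \<Rightarrow> real" where
  "wk c x [] a = 0"
| "wk c x (y # ys) a = stp c x y a + wk c y ys a"

lemma outF_stp:
  assumes "finite V" "x \<in> V" "y \<in> V"
  shows "outF V (stp c x y) v = (if c x y then (if v = x then 1 else 0) else (if v = y then -1 else 0))"
proof (cases "c x y")
  case True
  then have "outF V (stp c x y) v = (\<Sum>w\<in>V. if w = y then (if v = x then 1 else 0) else 0)"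
    unfolding outF_def stp_def by (intro sum.cong) auto
  then show ?thesis using True assms by simp
next
  case False
  then have "outF V (stp c x y) v = (\<Sum>w\<in>V. if w = x then (if v = y then -1 else 0) else 0)"
    unfolding outF_def stp_def by (intro sum.cong) auto
  then show ?thesis using False assms by simp
qed

lemma inF_stp:
  assumes "finite V" "x \<in> V" "y \<in> V"
  shows "inF V (stp c x y) v = (if c x y then (if v = y then 1 else 0) else (if v = x then -1 else 0))"
proof (cases "c x y")
  case True
  then have "inF V (stp c x y) v = (\<Sum>w\<in>V. if w = x then (if v = y then 1 else 0) else 0)"
    unfolding inF_def stp_def by (intro sum.cong) auto
  then show ?thesis using True assms by simp
next
  case False
  then have "inF V (stp c x y) v = (\<Sum>w\<in>V. if w = y then (if v = x then -1 else 0) else 0)"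
    unfolding inF_def stp_def by (intro sum.cong) auto
  then show ?thesis using False assms by simp
qed

lemma wf_tele:
  assumes "finite V" "x \<in> V" "set ys \<subseteq> V"
  shows "outF V (wk c x ys) v - inF V (wk c x ys) v
         = (if v = x then 1 else 0) - (if v = last (x # ys) then 1 else 0)"
  using assms(2,3)
proof (induction ys arbitrary: x)
  case Nil
  then show ?case by (simp add: outF_def inF_def)
next
  case (Cons y ys)
  have o: "outF V (wk c x (y # ys)) v = outF V (stp c x y) v + outF V (wk c y ys) v"
    by (simp add: outF_def sum.distrib)
  have i: "inF V (wk c x (y # ys)) v = inF V (stp c x y) v + inF V (wk c y ys) v"
    by (simp add: inF_def sum.distrib)
  have IH: "outF V (wk c y ys) v - inF V (wk c y ys) v
         = (if v = y then 1 else 0) - (if v = last (y # ys) then 1 else 0)"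
    using Cons by auto
  show ?case using o i IH outF_stp[OF assms(1) Cons(2), of y c v] inF_stp[OF assms(1) Cons(2), of y c v] Cons(3)
    by (auto simp del: wk.simps)
qed

lemma wf_vals:
  assumes "rtrancl_path r x ys z" "distinct (x # ys)"
  shows "(wk c x ys a \<noteq> 0 \<longrightarrow> fst a \<in> set (x # ys) \<and> snd a \<in> set (x # ys)) \<and>
         (wk c x ys a = 0 \<or> (wk c x ys a = 1 \<and> r (fst a) (snd a) \<and> c (fst a) (snd a)) \<or>
          (wk c x ys a = -1 \<and> r (snd a) (fst a) \<and> \<not> c (snd a) (fst a)))"
  using assms
proof (induction arbitrary: a rule: rtrancl_path.induct)
  case (base x)
  then show ?case by simp
next
  case (step x y ys z)
  have d: "distinct (y # ys)" "x \<notin> set (y # ys)" using step.prems by auto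
  note IH = step.IH[OF d(1), of a]
  show ?case
  proof (cases "a = (x, y) \<or> a = (y, x)")
    case True
    then have "wk c y ys a = 0" using IH d(2) by auto
    then show ?thesis using True step.hyps(1) d by (auto simp: stp_def)
  next
    case False
    then have "stp c x y a = 0" by (auto simp: stp_def)
    then show ?thesis using IH by auto
  qed
qed

lemma inF_fwd:
  assumes "finite V" "x \<in> V" "set ys \<subseteq> V" "distinct (x # ys)"
  shows "inF V (wk (\<lambda>_ _. True) x ys) v = (if v \<in> set ys then 1 else 0)"
  using assms(2-4)
proof (induction ys arbitrary: x)
  case Nil
  then show ?case by (simp add: inF_def)
next
  case (Cons y ys)
  have i: "inF V (wk (\<lambda>_ _. True) x (y # ys)) v = inF V (stp (\<lambda>_ _. True) x y) v + inF V (wk (\<lambda>_ _. True) y ys) v"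
    by (simp add: inF_def sum.distrib)
  have IH: "inF V (wk (\<lambda>_ _. True) y ys) v = (if v \<in> set ys then 1 else 0)"
    using Cons by auto
  show ?case using i IH inF_stp[OF assms(1) Cons(2), of y "\<lambda>_ _. True" v] Cons(3,4) by (auto simp del: wk.simps)
qed

lemma path_last: "rtrancl_path r x ys z \<Longrightarrow> last (x # ys) = z"
  by (induction rule: rtrancl_path.induct) (auto elim: rtrancl_path.cases)

lemma path_in:
  assumes "rtrancl_path r x ys z" "\<And>a b. r a b \<Longrightarrow> b \<in> V"
  shows "set ys \<subseteq> V"
  using assms by (induction rule: rtrancl_path.induct) auto

lemma cut_lemma:
  assumes "finite V" "cflow V A s t f" "R \<subseteq> V" "s \<in> R" "t \<notin> R"
  shows "fval V s f = (\<Sum>a\<in>R \<times> (V - R). f a) - (\<Sum>a\<in>(V - R) \<times> R. f a)"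
proof -
  have fR: "finite R" using assms(1,3) finite_subset by blast
  have z: "outF V f x - inF V f x = 0" if "x \<in> R - {s}" for x
  proof -
    have "x \<in> V - {s, t}" using that assms(3,5) by auto
    then show ?thesis using assms(2) unfolding cflow_def by auto
  qed
  have "(\<Sum>x\<in>R. outF V f x - inF V f x) = outF V f s - inF V f s + (\<Sum>x\<in>R-{s}. outF V f x - inF V f x)"
    using fR assms(4) by (simp add: sum.remove)
  also have "\<dots> = fval V s f" using z by (simp add: fval_def)
  finally have 1: "(\<Sum>x\<in>R. outF V f x - inF V f x) = fval V s f" .
  have o: "(\<Sum>x\<in>R. outF V f x) = (\<Sum>a\<in>R \<times> V. f a)"
    unfolding outF_def using sum.cartesian_product[of "\<lambda>x w. f (x, w)" V R] by simp
  have "(\<Sum>x\<in>R. inF V f x) = (\<Sum>u\<in>V. \<Sum>x\<in>R. f (u, x))"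
    unfolding inF_def by (rule sum.swap)
  also have "\<dots> = (\<Sum>a\<in>V \<times> R. f a)" by (simp add: sum.cartesian_product)
  finally have i: "(\<Sum>x\<in>R. inF V f x) = (\<Sum>a\<in>V \<times> R. f a)" .
  have RV: "R \<times> V = R \<times> R \<union> R \<times> (V - R)" "V \<times> R = R \<times> R \<union> (V - R) \<times> R"
    using assms(3) by auto
  have so: "(\<Sum>a\<in>R \<times> V. f a) = (\<Sum>a\<in>R \<times> R. f a) + (\<Sum>a\<in>R \<times> (V - R). f a)"
    unfolding RV(1) by (rule sum.union_disjoint) (use fR assms(1) in auto)
  have si: "(\<Sum>a\<in>V \<times> R. f a) = (\<Sum>a\<in>R \<times> R. f a) + (\<Sum>a\<in>(V - R) \<times> R. f a)"
    unfolding RV(2) by (rule sum.union_disjoint) (use fR assms(1) in auto)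
  show ?thesis using 1 o i so si by (simp add: sum_subtractf)
qed

lemma cflow_zero: "cflow V A s t (\<lambda>_. 0)"
  by (simp add: cflow_def inF_def outF_def)

lemma fval_zero: "fval V s (\<lambda>_. 0) = 0"
  by (simp add: fval_def inF_def outF_def)

lemma support_path:
  assumes "finite V" "A \<subseteq> V \<times> V" "s \<in> V" "cflow V A s t f" "fval V s f > 0"
  shows "\<exists>ys. rtrancl_path (\<lambda>x y. (x, y) \<in> A \<and> f (x, y) > 0) s ys t \<and> distinct (s # ys)"
proof -
  let ?r = "\<lambda>x y. (x, y) \<in> A \<and> f (x, y) > 0"
  show ?thesis
  proof (cases "?r\<^sup>*\<^sup>* s t")
    case True
    then obtain xs where "rtrancl_path ?r s xs t" unfolding rtranclp_eq_rtrancl_path by blast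
    then obtain xs' where "rtrancl_path ?r s xs' t" "distinct (s # xs')"
      by (rule rtrancl_path_distinct)
    then show ?thesis by blast
  next
    case False
    define R where "R = {x\<in>V. ?r\<^sup>*\<^sup>* s x}"
    have R: "R \<subseteq> V" "s \<in> R" "t \<notin> R" using False assms(3) by (auto simp: R_def)
    have z: "f a = 0" if aR: "a \<in> R \<times> (V - R)" for a
    proof (rule ccontr)
      assume "f a \<noteq> 0"
      then have "f a > 0" "a \<in> A" using assms(4) unfolding cflow_def by (metis less_eq_real_def)+
      obtain x y where a: "a = (x, y)" "x \<in> R" "y \<in> V" "y \<notin> R" using aR by (cases a) auto
      have "?r\<^sup>*\<^sup>* s x" using a(2) by (simp add: R_def)
      moreover have "?r x y" using \<open>f a > 0\<close> \<open>a \<in> A\<close> a by simp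
      ultimately have "?r\<^sup>*\<^sup>* s y" by (rule rtranclp.rtrancl_into_rtrancl)
      then show False using a(3,4) by (simp add: R_def)
    qed
    have "(\<Sum>a\<in>(V - R) \<times> R. f a) \<ge> 0" using assms(4) unfolding cflow_def by (intro sum_nonneg) auto
    then have "fval V s f \<le> 0" using cut_lemma[OF assms(1,4) R] z by simp
    then show ?thesis using assms(5) by simp
  qed
qed

lemma cflow_nonneg: "cflow V A s t f \<Longrightarrow> 0 \<le> f a"
  unfolding cflow_def by blast
lemma cflow_out: "cflow V A s t f \<Longrightarrow> a \<notin> A \<Longrightarrow> f a = 0"
  unfolding cflow_def by blast

lemma int_pos_ge1: "(x::real) \<in> \<int> \<Longrightarrow> 0 < x \<Longrightarrow> 1 \<le> x"
  by (auto elim!: Ints_cases)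

lemma int_lt1: "(x::real) \<in> \<int> \<Longrightarrow> 0 \<le> x \<Longrightarrow> x < 1 \<Longrightarrow> x = 0"
  by (auto elim!: Ints_cases)

lemma inF_add: "inF V (\<lambda>a. g a + h a) x = inF V g x + inF V h x"
  by (simp add: inF_def sum.distrib)
lemma outF_add: "outF V (\<lambda>a. g a + h a) x = outF V g x + outF V h x"
  by (simp add: outF_def sum.distrib)
lemma inF_diff: "inF V (\<lambda>a. g a - h a) x = inF V g x - inF V h x"
  by (simp add: inF_def sum_subtractf)
lemma outF_diff: "outF V (\<lambda>a. g a - h a) x = outF V g x - outF V h x"
  by (simp add: outF_def sum_subtractf)

lemma decomp:
  assumes "finite V" "A \<subseteq> V \<times> V" "s \<in> V" "s \<noteq> t"
  shows "cflow V A s t g \<Longrightarrow> (\<forall>a. g a \<in> \<int>) \<Longrightarrow> real k \<le> fval V s g \<Longrightarrow>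
    \<exists>Ps. length Ps = k \<and> (\<forall>ys\<in>set Ps. rtrancl_path (\<lambda>x y. (x,y) \<in> A) s ys t \<and> distinct (s # ys)) \<and>
         (\<forall>a. (\<Sum>ys\<leftarrow>Ps. wk (\<lambda>_ _. True) s ys a) \<le> g a)"
proof (induction k arbitrary: g)
  case 0
  then show ?case by (intro exI[of _ "[]"]) (auto simp: cflow_def)
next
  case (Suc k)
  have "fval V s g > 0" using Suc.prems(3) by simp
  then obtain ys where p: "rtrancl_path (\<lambda>x y. (x,y)\<in>A \<and> g (x,y) > 0) s ys t" "distinct (s#ys)"
    using support_path[OF assms(1-3) Suc.prems(1)] by blast
  define h where "h = wk (\<lambda>_ _. True) s ys"
  have pA: "rtrancl_path (\<lambda>x y. (x,y)\<in>A) s ys t" by (rule rtrancl_path_mono[OF p(1)]) auto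
  have Vys: "set ys \<subseteq> V" using path_in[OF pA] assms(2) by auto
  have lst: "last (s#ys) = t" using path_last[OF p(1)] .
  have hv: "h a = 0 \<or> (h a = 1 \<and> a \<in> A \<and> g a > 0)" for a
    using wf_vals[OF p, of "\<lambda>_ _. True" a] unfolding h_def by (cases a) auto
  define g' where "g' = (\<lambda>a. g a - h a)"
  have ge: "h a \<le> g a" for a
    using hv[of a] int_pos_ge1[of "g a"] Suc.prems(2) cflow_nonneg[OF Suc.prems(1), of a] by auto
  have tele: "outF V h x - inF V h x = (if x = s then 1 else 0) - (if x = t then 1 else 0)" for x
    using wf_tele[OF assms(1,3) Vys, of "\<lambda>_ _. True" x] lst unfolding h_def by simp
  have cf: "cflow V A s t g'"
    unfolding cflow_def
  proof (intro conjI allI ballI impI)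
    fix a show "0 \<le> g' a" using ge[of a] by (simp add: g'_def)
  next
    fix a assume "a \<notin> A" then show "g' a = 0" using hv[of a] cflow_out[OF Suc.prems(1)] by (auto simp: g'_def)
  next
    fix x assume x: "x \<in> V - {s, t}"
    then have "inF V g x = outF V g x" using Suc.prems(1) by (auto simp: cflow_def)
    then show "inF V g' x = outF V g' x" using tele[of x] x unfolding g'_def inF_diff outF_diff by auto
  qed
  have ig: "\<forall>a. g' a \<in> \<int>" using Suc.prems(2) hv unfolding g'_def by (metis Ints_0 Ints_1 Ints_diff)
  have fv: "fval V s g' = fval V s g - 1"
    using tele[of s] assms(4) unfolding fval_def g'_def inF_diff outF_diff by auto
  then have "real k \<le> fval V s g'" using Suc.prems(3) by simp
  from Suc.IH[OF cf ig this] obtain Ps where Ps: "length Ps = k"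
    "\<forall>ys\<in>set Ps. rtrancl_path (\<lambda>x y. (x,y) \<in> A) s ys t \<and> distinct (s # ys)"
    "\<forall>a. (\<Sum>ys\<leftarrow>Ps. wk (\<lambda>_ _. True) s ys a) \<le> g' a" by blast
  show ?case
  proof (intro exI[of _ "ys # Ps"] conjI)
    show "length (ys # Ps) = Suc k" using Ps by simp
    show "\<forall>ys\<in>set (ys # Ps). rtrancl_path (\<lambda>x y. (x,y) \<in> A) s ys t \<and> distinct (s # ys)"
      using Ps pA p(2) by auto
    show "\<forall>a. (\<Sum>ys\<leftarrow>ys # Ps. wk (\<lambda>_ _. True) s ys a) \<le> g a"
      using Ps(3) unfolding g'_def h_def by (simp del: wk.simps) (smt (verit))
  qed
qed

definition res :: "('v \<times> 'v) set \<Rightarrow> ('v \<times> 'v) set \<Rightarrow> ('v \<times> 'v \<Rightarrow> real) \<Rightarrow> 'v \<Rightarrow> 'v \<Rightarrow> bool" where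
  "res A U g x y \<longleftrightarrow> ((x,y) \<in> A \<and> ((x,y) \<notin> U \<or> g (x,y) < 1)) \<or> ((y,x) \<in> A \<and> 0 < g (y,x))"
definition fw :: "('v \<times> 'v) set \<Rightarrow> ('v \<times> 'v) set \<Rightarrow> ('v \<times> 'v \<Rightarrow> real) \<Rightarrow> 'v \<Rightarrow> 'v \<Rightarrow> bool" where
  "fw A U g x y \<longleftrightarrow> (x,y) \<in> A \<and> ((x,y) \<notin> U \<or> g (x,y) < 1)"

lemma no_aug:
  assumes "finite V" "s \<in> V" "cflow V A s t g" "\<forall>a\<in>U. g a \<le> 1" "\<not> (res A U g)\<^sup>*\<^sup>* s t"
    "cflow V A s t f" "\<forall>a\<in>U. f a \<le> 1"
  shows "fval V s f \<le> fval V s g"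
proof -
  define R where "R = {x\<in>V. (res A U g)\<^sup>*\<^sup>* s x}"
  have R: "R \<subseteq> V" "s \<in> R" "t \<notin> R" using assms(2,5) by (auto simp: R_def)
  have nr: "\<not> res A U g x y" if "x \<in> R" "y \<in> V" "y \<notin> R" for x y
  proof
    assume "res A U g x y"
    moreover have "(res A U g)\<^sup>*\<^sup>* s x" using that(1) by (simp add: R_def)
    ultimately have "(res A U g)\<^sup>*\<^sup>* s y" by (metis rtranclp.rtrancl_into_rtrancl)
    then show False using that(2,3) by (simp add: R_def)
  qed
  have 1: "f a \<le> g a" if aR: "a \<in> R \<times> (V - R)" for a
  proof -
    obtain x y where a: "a = (x,y)" "x \<in> R" "y \<in> V" "y \<notin> R" using aR by (cases a) auto
    have "\<not> ((x,y) \<in> A \<and> ((x,y) \<notin> U \<or> g (x,y) < 1))" using nr[OF a(2-4)] by (simp add: res_def)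
    then show ?thesis using assms(3,4,6,7) a(1) unfolding cflow_def by fastforce
  qed
  have 2: "g a = 0" if aR: "a \<in> (V - R) \<times> R" for a
  proof -
    obtain x y where a: "a = (y,x)" "x \<in> R" "y \<in> V" "y \<notin> R" using aR by (cases a) auto
    have "\<not> ((y,x) \<in> A \<and> 0 < g (y,x))" using nr[OF a(2-4)] by (simp add: res_def)
    then show ?thesis using assms(3) a(1) unfolding cflow_def by (metis less_eq_real_def)
  qed
  have fR: "finite R" using R(1) assms(1) finite_subset by blast
  have "(\<Sum>a\<in>R \<times> (V - R). f a) \<le> (\<Sum>a\<in>R \<times> (V - R). g a)" by (rule sum_mono) (use 1 in auto)
  moreover have "(\<Sum>a\<in>(V - R) \<times> R. g a) = 0" using 2 by simp
  moreover have "(\<Sum>a\<in>(V - R) \<times> R. f a) \<ge> 0" using assms(6) unfolding cflow_def by (intro sum_nonneg) auto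
  ultimately show ?thesis using cut_lemma[OF assms(1,3) R] cut_lemma[OF assms(1,6) R] by linarith
qed

lemma aug:
  assumes "finite V" "A \<subseteq> V \<times> V" "s \<in> V" "s \<noteq> t" "cflow V A s t g" "\<forall>a\<in>U. g a \<le> 1"
    "\<forall>a. g a \<in> \<int>" "(res A U g)\<^sup>*\<^sup>* s t"
  shows "\<exists>g'. cflow V A s t g' \<and> (\<forall>a\<in>U. g' a \<le> 1) \<and> (\<forall>a. g' a \<in> \<int>) \<and> fval V s g' = fval V s g + 1"
proof -
  obtain xs where "rtrancl_path (res A U g) s xs t" using assms(8) unfolding rtranclp_eq_rtrancl_path by blast
  then obtain ys where p: "rtrancl_path (res A U g) s ys t" "distinct (s # ys)"
    by (rule rtrancl_path_distinct)
  define h where "h = wk (fw A U g) s ys"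
  have Vys: "set ys \<subseteq> V" using path_in[OF p(1), of V] assms(2) unfolding res_def by auto
  have lst: "last (s#ys) = t" using path_last[OF p(1)] .
  have hv: "h a = 0 \<or> (h a = 1 \<and> a \<in> A \<and> (a \<notin> U \<or> g a < 1)) \<or> (h a = -1 \<and> a \<in> A \<and> g a > 0)" for a
    using wf_vals[OF p, of "fw A U g" a] unfolding h_def by (cases a) (auto simp: res_def fw_def)
  define g' where "g' = (\<lambda>a. g a + h a)"
  have tele: "outF V h x - inF V h x = (if x = s then 1 else 0) - (if x = t then 1 else 0)" for x
    using wf_tele[OF assms(1,3) Vys, of "fw A U g" x] lst unfolding h_def by simp
  have g0: "0 \<le> g a" for a using cflow_nonneg[OF assms(5)] .
  have cf: "cflow V A s t g'"
    unfolding cflow_def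
  proof (intro conjI allI ballI impI)
    fix a show "0 \<le> g' a" using hv[of a] g0[of a] int_pos_ge1[of "g a"] assms(7) by (auto simp: g'_def)
  next
    fix a assume "a \<notin> A" then show "g' a = 0" using hv[of a] cflow_out[OF assms(5)] by (auto simp: g'_def)
  next
    fix x assume x: "x \<in> V - {s, t}"
    then have "inF V g x = outF V g x" using assms(5) by (auto simp: cflow_def)
    then show "inF V g' x = outF V g' x" using tele[of x] x unfolding g'_def inF_add outF_add by auto
  qed
  have cap: "\<forall>a\<in>U. g' a \<le> 1"
  proof
    fix a assume a: "a \<in> U"
    show "g' a \<le> 1" using hv[of a] assms(6) a int_lt1[of "g a"] assms(7) g0[of a] by (auto simp: g'_def)
  qed
  have ig: "\<forall>a. g' a \<in> \<int>" using assms(7) hv unfolding g'_def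
    by (metis Ints_0 Ints_1 Ints_add Ints_minus)
  have fv: "fval V s g' = fval V s g + 1"
    using tele[of s] assms(4) unfolding fval_def g'_def inF_add outF_add by auto
  show ?thesis using cf cap ig fv by blast
qed

lemma integral_flow:
  assumes "finite V" "A \<subseteq> V \<times> V" "s \<in> V" "s \<noteq> t" "cflow V A s t f" "\<forall>a\<in>U. f a \<le> 1"
  shows "\<exists>g. cflow V A s t g \<and> (\<forall>a\<in>U. g a \<le> 1) \<and> (\<forall>a. g a \<in> \<int>) \<and> fval V s f \<le> fval V s g"
proof -
  have "\<exists>g. cflow V A s t g \<and> (\<forall>a\<in>U. g a \<le> 1) \<and> (\<forall>a. g a \<in> \<int>) \<and> min (real n) (fval V s f) \<le> fval V s g" for n
  proof (induction n)
    case 0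
    show ?case by (intro exI[of _ "\<lambda>_. 0"]) (simp add: cflow_zero fval_zero)
  next
    case (Suc n)
    then obtain g where g: "cflow V A s t g" "\<forall>a\<in>U. g a \<le> 1" "\<forall>a. g a \<in> \<int>"
      "min (real n) (fval V s f) \<le> fval V s g" by blast
    show ?case
    proof (cases "fval V s f \<le> fval V s g")
      case True
      then show ?thesis using g by (intro exI[of _ g]) auto
    next
      case False
      then have "(res A U g)\<^sup>*\<^sup>* s t" using no_aug[OF assms(1,3) g(1,2) _ assms(5,6)] by blast
      from aug[OF assms(1-4) g(1-3) this] obtain g' where
        "cflow V A s t g'" "\<forall>a\<in>U. g' a \<le> 1" "\<forall>a. g' a \<in> \<int>" "fval V s g' = fval V s g + 1" by blast
      then show ?thesis using g(4) by (intro exI[of _ g']) auto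
    qed
  qed
  from this[of "nat \<lceil>fval V s f\<rceil>"] show ?thesis
    by (metis min.absorb2 of_nat_ceiling order.trans)
qed

abbreviation "intern m B \<equiv> flow_nodes m B - {Src, Snk}"

lemma finite_nodes: "finite (flow_nodes m B)"
proof -
  have "flow_nodes m B \<subseteq> {Src, Snk} \<union> (\<lambda>(v,w). Lnd {v,w}) ` ({..<m} \<times> {..<m}) \<union> (\<lambda>(v,w). Rnd v w) ` ({..<m} \<times> {..<m})"
    unfolding flow_nodes_def by auto
  then show ?thesis by (rule finite_subset) auto
qed

lemma E_Src: "(Src, z) \<in> flow_edges m D B \<longleftrightarrow> (\<exists>a b. z = Lnd {a,b} \<and> a<m \<and> b<m \<and> a\<noteq>b \<and> (a,b)\<notin>B)"
  by (auto simp: flow_edges_def)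
lemma E_Lnd: "(Lnd S, z) \<in> flow_edges m D B \<longleftrightarrow> (\<exists>v w. S = {v,w} \<and> v<m \<and> w<m \<and> v\<noteq>w \<and> (v,w)\<notin>B \<and>
     (z = Rnd v w \<or> (\<exists>u. z = Rnd v u \<and> (w,u)\<in>B)))"
  by (auto simp: flow_edges_def)
lemma E_Rnd: "(Rnd v x, z) \<in> flow_edges m D B \<longleftrightarrow> v<m \<and> ((\<exists>u. z = Rnd v u \<and> (x,u)\<in>D) \<or> (z = Snk \<and> x \<in> pa D v))"
  by (auto simp: flow_edges_def pa_def)
lemma E_Snk: "(Snk, z) \<notin> flow_edges m D B"
  by (auto simp: flow_edges_def)
lemma E_toSrc: "(z, Src) \<notin> flow_edges m D B"
  by (auto simp: flow_edges_def)

lemma E_sub: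
  assumes "mixed_graph m D B"
  shows "flow_edges m D B \<subseteq> flow_nodes m B \<times> flow_nodes m B"
proof
  fix e assume e: "e \<in> flow_edges m D B"
  have D: "D \<subseteq> {..<m} \<times> {..<m}" and B: "B \<subseteq> {..<m} \<times> {..<m}" using assms by (auto simp: mixed_graph_def)
  show "e \<in> flow_nodes m B \<times> flow_nodes m B"
    using e D B unfolding flow_edges_def flow_nodes_def pa_def by auto
qed

lemma Src_in: "Src \<in> flow_nodes m B" and Snk_in: "Snk \<in> flow_nodes m B"
  by (auto simp: flow_nodes_def)

lemma is_flow_cflow:
  "is_flow m D B f \<longleftrightarrow> cflow (flow_nodes m B) (flow_edges m D B) Src Snk f \<and>
     (\<forall>x\<in>intern m B. inF (flow_nodes m B) f x \<le> 1)"
  unfolding is_flow_def cflow_def inF_def outF_def by auto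

lemma flow_size_fval:
  "flow_size m B f = outF (flow_nodes m B) f Src"
  by (simp add: flow_size_def outF_def)

section \<open>Split graph\<close>

definition SV :: "'v set \<Rightarrow> ('v \<times> bool) set" where "SV N = N \<times> UNIV"
definition SA :: "('v \<times> 'v) set \<Rightarrow> 'v set \<Rightarrow> (('v \<times> bool) \<times> ('v \<times> bool)) set" where
  "SA E I = {((x,True),(y,False)) | x y. (x,y) \<in> E} \<union> {((x,False),(x,True)) | x. x \<in> I}"
definition SU :: "'v set \<Rightarrow> (('v \<times> bool) \<times> ('v \<times> bool)) set" where
  "SU I = {((x,False),(x,True)) | x. x \<in> I}"
definition SF :: "'v set \<Rightarrow> 'v set \<Rightarrow> ('v \<times> 'v \<Rightarrow> real) \<Rightarrow> ('v \<times> bool) \<times> ('v \<times> bool) \<Rightarrow> real" where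
  "SF N I f a = (if snd (fst a) \<and> \<not> snd (snd a) then f (fst (fst a), fst (snd a))
     else if \<not> snd (fst a) \<and> snd (snd a) \<and> fst (fst a) = fst (snd a) \<and> fst (fst a) \<in> I
     then inF N f (fst (fst a)) else 0)"

lemma sum_SV:
  assumes "finite N"
  shows "(\<Sum>p\<in>SV N. h p) = (\<Sum>u\<in>N. h (u,True)) + (\<Sum>u\<in>N. h (u,False))"
proof -
  have "(\<Sum>p\<in>SV N. h p) = (\<Sum>u\<in>N. \<Sum>b\<in>UNIV. h (u,b))"
    unfolding SV_def by (simp add: sum.cartesian_product)
  also have "\<dots> = (\<Sum>u\<in>N. h (u,True) + h (u,False))" by (simp add: UNIV_bool add.commute)
  finally show ?thesis by (simp add: sum.distrib)
qed

lemma sum_delta_conj: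
  assumes "finite N" "x \<in> N"
  shows "(\<Sum>u\<in>N. if u = x \<and> P u then c u else (0::real)) = (if P x then c x else 0)"
proof -
  have "(\<Sum>u\<in>N. if u = x \<and> P u then c u else (0::real)) = (\<Sum>u\<in>N. if u = x then (if P x then c x else 0) else 0)"
    by (rule sum.cong) auto
  then show ?thesis using assms by simp
qed

lemma SF_in_F: "finite N \<Longrightarrow> inF (SV N) (SF N I f) (x,False) = inF N f x"
  unfolding inF_def by (simp add: sum_SV SF_def)
lemma SF_out_F: "finite N \<Longrightarrow> x \<in> N \<Longrightarrow> outF (SV N) (SF N I f) (x,False) = (if x \<in> I then inF N f x else 0)"
  unfolding outF_def by (simp add: sum_SV SF_def if_distrib cong: if_cong)
lemma SF_in_T: "finite N \<Longrightarrow> x \<in> N \<Longrightarrow> inF (SV N) (SF N I f) (x,True) = (if x \<in> I then inF N f x else 0)"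
proof -
  assume a: "finite N" "x \<in> N"
  have "inF (SV N) (SF N I f) (x,True) = (\<Sum>u\<in>N. SF N I f ((u,True),(x,True))) + (\<Sum>u\<in>N. SF N I f ((u,False),(x,True)))"
    unfolding inF_def using a by (simp add: sum_SV)
  also have "\<dots> = 0 + (\<Sum>u\<in>N. if u = x \<and> u \<in> I then inF N f x else 0)"
    by (intro arg_cong2[where f="(+)"] sum.cong) (auto simp: SF_def)
  also have "\<dots> = (if x \<in> I then inF N f x else 0)" using a by (simp add: sum_delta_conj)
  finally show ?thesis .
qed
lemma SF_out_T: "finite N \<Longrightarrow> outF (SV N) (SF N I f) (x,True) = outF N f x"
  unfolding outF_def by (simp add: sum_SV SF_def)

lemma SA_fin: "finite N \<Longrightarrow> finite (SV N)" by (simp add: SV_def)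
lemma SA_sub: "E \<subseteq> N \<times> N \<Longrightarrow> I \<subseteq> N \<Longrightarrow> SA E I \<subseteq> SV N \<times> SV N"
  unfolding SA_def SV_def by auto
lemma SA_T_F: "((x,True),(y,False)) \<in> SA E I \<longleftrightarrow> (x,y) \<in> E"
  unfolding SA_def by auto
lemma SA_F_T: "((x,False),(y,True)) \<in> SA E I \<longleftrightarrow> x = y \<and> x \<in> I"
  unfolding SA_def by auto
lemma SA_F_F: "((x,False),(y,False)) \<notin> SA E I" and SA_T_T: "((x,True),(y,True)) \<notin> SA E I"
  unfolding SA_def by auto

lemma SF_flow:
  assumes mg: "mixed_graph m D B" and fl: "is_flow m D B f"
  defines "N \<equiv> flow_nodes m B" and "E \<equiv> flow_edges m D B" and "I \<equiv> intern m B"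
  shows "cflow (SV N) (SA E I) (Src,True) (Snk,False) (SF N I f) \<and> (\<forall>a\<in>SU I. SF N I f a \<le> 1) \<and>
         fval (SV N) (Src,True) (SF N I f) = flow_size m B f"
proof -
  have fN: "finite N" unfolding N_def by (rule finite_nodes)
  have cf: "cflow N E Src Snk f" and cap: "\<forall>x\<in>I. inF N f x \<le> 1"
    using fl unfolding is_flow_cflow N_def E_def I_def by auto
  have f0: "0 \<le> f a" for a using cflow_nonneg[OF cf] .
  have in0: "0 \<le> inF N f x" for x unfolding inF_def by (intro sum_nonneg) (simp add: f0)
  have inSrc: "inF N f Src = 0"
    unfolding inF_def by (intro sum.neutral ballI cflow_out[OF cf]) (simp add: E_def E_toSrc)
  have outSnk: "outF N f Snk = 0"
    unfolding outF_def by (intro sum.neutral ballI cflow_out[OF cf]) (simp add: E_def E_Snk)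
  have SrcN: "Src \<in> N" and SnkN: "Snk \<in> N" by (simp_all add: N_def Src_in Snk_in)
  have SrcI: "Src \<notin> I" and SnkI: "Snk \<notin> I" by (simp_all add: I_def)
  have c1: "\<forall>a. 0 \<le> SF N I f a" by (simp add: SF_def f0 in0)
  have c2: "\<forall>a. a \<notin> SA E I \<longrightarrow> SF N I f a = 0"
  proof (intro allI impI)
    fix a assume a: "a \<notin> SA E I"
    obtain x b y c where ae: "a = ((x,b),(y,c))" by (metis prod.exhaust)
    show "SF N I f a = 0"
    proof (cases "b \<and> \<not> c")
      case True
      then have "(x,y) \<notin> E" using a ae by (simp add: SA_T_F)
      then show ?thesis using True ae cflow_out[OF cf] by (simp add: SF_def)
    next
      case False
      then show ?thesis using a ae by (auto simp: SF_def SA_F_T)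
    qed
  qed
  have c3: "\<forall>p\<in>SV N - {(Src,True),(Snk,False)}. inF (SV N) (SF N I f) p = outF (SV N) (SF N I f) p"
  proof
    fix p assume p: "p \<in> SV N - {(Src,True),(Snk,False)}"
    obtain x b where pe: "p = (x,b)" by (metis prod.exhaust)
    have xN: "x \<in> N" using p pe by (simp add: SV_def)
    show "inF (SV N) (SF N I f) p = outF (SV N) (SF N I f) p"
    proof (cases b)
      case False
      then have "x \<noteq> Snk" using p pe by auto
      then have "x \<in> I \<or> x = Src" using xN by (auto simp: I_def N_def)
      then show ?thesis using False pe SF_in_F[OF fN] SF_out_F[OF fN xN] inSrc SrcI by auto
    next
      case True
      then have "x \<noteq> Src" using p pe by auto
      then have "x \<in> I \<or> x = Snk" using xN by (auto simp: I_def N_def)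
      moreover have "x \<in> I \<Longrightarrow> inF N f x = outF N f x" using cf unfolding cflow_def I_def N_def by auto
      ultimately show ?thesis using True pe SF_in_T[OF fN xN] SF_out_T[OF fN] outSnk SnkI by auto
    qed
  qed
  have cap': "\<forall>a\<in>SU I. SF N I f a \<le> 1" using cap by (auto simp: SU_def SF_def)
  have fv: "fval (SV N) (Src,True) (SF N I f) = flow_size m B f"
    unfolding fval_def flow_size_fval using SF_in_T[OF fN SrcN] SF_out_T[OF fN] SrcI by (simp add: N_def)
  show ?thesis using c1 c2 c3 cap' fv unfolding cflow_def by blast
qed

lemma from_split:
  assumes mg: "mixed_graph m D B"
  defines "N \<equiv> flow_nodes m B" and "E \<equiv> flow_edges m D B" and "I \<equiv> intern m B"
  assumes cf: "cflow (SV N) (SA E I) (Src,True) (Snk,False) G" and cap: "\<forall>a\<in>SU I. G a \<le> 1"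
    and int: "\<forall>a. G a \<in> \<int>"
  defines "g \<equiv> (\<lambda>e. G ((fst e, True), (snd e, False)))"
  shows "is_flow m D B g \<and> (\<forall>e. g e \<in> \<int>) \<and> flow_size m B g = fval (SV N) (Src,True) G"
proof -
  have fN: "finite N" unfolding N_def by (rule finite_nodes)
  have G0: "G a = 0" if "a \<notin> SA E I" for a using cflow_out[OF cf that] .
  have iF: "inF (SV N) G (x,False) = inF N g x" for x
  proof -
    have "inF (SV N) G (x,False) = (\<Sum>u\<in>N. G ((u,True),(x,False))) + (\<Sum>u\<in>N. G ((u,False),(x,False)))"
      unfolding inF_def using fN by (simp add: sum_SV)
    also have "(\<Sum>u\<in>N. G ((u,False),(x,False))) = 0" by (intro sum.neutral ballI G0) (simp add: SA_F_F)
    finally show ?thesis by (simp add: inF_def g_def)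
  qed
  have oT: "outF (SV N) G (x,True) = outF N g x" for x
  proof -
    have "outF (SV N) G (x,True) = (\<Sum>u\<in>N. G ((x,True),(u,True))) + (\<Sum>u\<in>N. G ((x,True),(u,False)))"
      unfolding outF_def using fN by (simp add: sum_SV)
    also have "(\<Sum>u\<in>N. G ((x,True),(u,True))) = 0" by (intro sum.neutral ballI G0) (simp add: SA_T_T)
    finally show ?thesis by (simp add: outF_def g_def)
  qed
  have oF: "outF (SV N) G (x,False) = G ((x,False),(x,True))" if xN: "x \<in> N" for x
  proof -
    have "outF (SV N) G (x,False) = (\<Sum>u\<in>N. G ((x,False),(u,True))) + (\<Sum>u\<in>N. G ((x,False),(u,False)))"
      unfolding outF_def using fN by (simp add: sum_SV)
    also have "(\<Sum>u\<in>N. G ((x,False),(u,False))) = 0" by (intro sum.neutral ballI G0) (simp add: SA_F_F)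
    also have "(\<Sum>u\<in>N. G ((x,False),(u,True))) = (\<Sum>u\<in>N. if u = x then G ((x,False),(x,True)) else 0)"
      by (rule sum.cong) (auto intro!: G0 simp: SA_F_T)
    finally show ?thesis using fN xN by simp
  qed
  have iT: "inF (SV N) G (x,True) = G ((x,False),(x,True))" if xN: "x \<in> N" for x
  proof -
    have "inF (SV N) G (x,True) = (\<Sum>u\<in>N. G ((u,True),(x,True))) + (\<Sum>u\<in>N. G ((u,False),(x,True)))"
      unfolding inF_def using fN by (simp add: sum_SV)
    also have "(\<Sum>u\<in>N. G ((u,True),(x,True))) = 0" by (intro sum.neutral ballI G0) (simp add: SA_T_T)
    also have "(\<Sum>u\<in>N. G ((u,False),(x,True))) = (\<Sum>u\<in>N. if u = x then G ((x,False),(x,True)) else 0)"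
      by (rule sum.cong) (auto intro!: G0 simp: SA_F_T)
    finally show ?thesis using fN xN by simp
  qed
  have c1: "\<forall>e. 0 \<le> g e" using cflow_nonneg[OF cf] by (simp add: g_def)
  have c2: "\<forall>e. e \<notin> E \<longrightarrow> g e = 0" by (auto intro!: G0 simp: g_def SA_T_F)
  have c3: "\<forall>x\<in>I. inF N g x = outF N g x \<and> inF N g x \<le> 1"
  proof
    fix x assume x: "x \<in> I"
    then have xN: "x \<in> N" by (simp add: I_def N_def)
    have "(x,True) \<in> SV N - {(Src,True),(Snk,False)}" "(x,False) \<in> SV N - {(Src,True),(Snk,False)}"
      using x xN by (auto simp: SV_def I_def)
    then have "inF (SV N) G (x,True) = outF (SV N) G (x,True)" "inF (SV N) G (x,False) = outF (SV N) G (x,False)"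
      using cf unfolding cflow_def by blast+
    moreover have "G ((x,False),(x,True)) \<le> 1" using cap x by (auto simp: SU_def)
    ultimately show "inF N g x = outF N g x \<and> inF N g x \<le> 1" using iF oT oF[OF xN] iT[OF xN] by simp
  qed
  have isf: "is_flow m D B g"
    unfolding is_flow_cflow cflow_def using c1 c2 c3 unfolding N_def E_def I_def by blast
  have SrcN: "Src \<in> N" by (simp add: N_def Src_in)
  have "G ((Src,False),(Src,True)) = 0" by (rule G0) (simp add: I_def SA_F_T)
  then have fs: "flow_size m B g = fval (SV N) (Src,True) G"
    unfolding fval_def flow_size_fval using iT[OF SrcN] oT by (simp add: N_def)
  show ?thesis using isf fs int by (simp add: g_def)
qed

lemma int_flow_exists:
  assumes mg: "mixed_graph m D B" and fl: "is_flow m D B f"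
  shows "\<exists>g. is_flow m D B g \<and> (\<forall>e. g e \<in> \<int>) \<and> flow_size m B f \<le> flow_size m B g"
proof -
  let ?N = "flow_nodes m B" and ?E = "flow_edges m D B" and ?I = "intern m B"
  have S: "cflow (SV ?N) (SA ?E ?I) (Src,True) (Snk,False) (SF ?N ?I f)"
     "\<forall>a\<in>SU ?I. SF ?N ?I f a \<le> 1" "fval (SV ?N) (Src,True) (SF ?N ?I f) = flow_size m B f"
    using SF_flow[OF mg fl] by auto
  have fin: "finite (SV ?N)" by (rule SA_fin[OF finite_nodes])
  have sub: "SA ?E ?I \<subseteq> SV ?N \<times> SV ?N" by (rule SA_sub[OF E_sub[OF mg]]) auto
  have sin: "(Src,True) \<in> SV ?N" by (simp add: SV_def Src_in)
  obtain G where G: "cflow (SV ?N) (SA ?E ?I) (Src,True) (Snk,False) G" "\<forall>a\<in>SU ?I. G a \<le> 1"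
    "\<forall>a. G a \<in> \<int>" "fval (SV ?N) (Src,True) (SF ?N ?I f) \<le> fval (SV ?N) (Src,True) G"
    using integral_flow[OF fin sub sin _ S(1,2)] by auto
  show ?thesis using from_split[OF mg G(1-3)] G(4) S(3) by (intro exI[of _ "\<lambda>e. G ((fst e, True), (snd e, False))"]) auto
qed

lemma inF_sum_list: "inF V (\<lambda>a. \<Sum>ys\<leftarrow>Ps. h ys a) x = (\<Sum>ys\<leftarrow>Ps. inF V (h ys) x)"
  by (induction Ps) (simp_all add: inF_add, simp add: inF_def)

lemma path_in_N:
  assumes mg: "mixed_graph m D B" and p: "rtrancl_path (\<lambda>x y. (x,y) \<in> flow_edges m D B) x ys z"
  shows "set ys \<subseteq> flow_nodes m B"
proof (rule path_in[OF p])
  fix a b assume "(a,b) \<in> flow_edges m D B"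
  then show "b \<in> flow_nodes m B" using E_sub[OF mg] by blast
qed

lemma paths_exist:
  assumes mg: "mixed_graph m D B" and fl: "is_flow m D B g" and int: "\<forall>e. g e \<in> \<int>"
    and k: "real k \<le> flow_size m B g"
  shows "\<exists>Ps. length Ps = k \<and>
     (\<forall>ys\<in>set Ps. rtrancl_path (\<lambda>x y. (x,y) \<in> flow_edges m D B) Src ys Snk \<and> distinct (Src # ys)) \<and>
     (\<forall>i<length Ps. \<forall>j<length Ps. i \<noteq> j \<longrightarrow> set (Ps!i) \<inter> set (Ps!j) \<subseteq> {Snk})"
proof -
  let ?N = "flow_nodes m B" and ?E = "flow_edges m D B" and ?I = "intern m B"
  have cf: "cflow ?N ?E Src Snk g" and cap: "\<forall>x\<in>?I. inF ?N g x \<le> 1"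
    using fl unfolding is_flow_cflow by auto
  have inSrc: "inF ?N g Src = 0"
    unfolding inF_def by (intro sum.neutral ballI cflow_out[OF cf]) (simp add: E_toSrc)
  have fv: "fval ?N Src g = flow_size m B g" by (simp add: fval_def flow_size_fval inSrc)
  have "\<exists>Ps. length Ps = k \<and> (\<forall>ys\<in>set Ps. rtrancl_path (\<lambda>x y. (x,y) \<in> ?E) Src ys Snk \<and> distinct (Src # ys)) \<and>
         (\<forall>a. (\<Sum>ys\<leftarrow>Ps. wk (\<lambda>_ _. True) Src ys a) \<le> g a)"
    by (rule decomp[where t=Snk and g=g and k=k, OF finite_nodes E_sub[OF mg] Src_in _ cf int]) (use k fv in auto)
  then obtain Ps where Ps: "length Ps = k"
    "\<forall>ys\<in>set Ps. rtrancl_path (\<lambda>x y. (x,y) \<in> ?E) Src ys Snk \<and> distinct (Src # ys)"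
    "\<forall>a. (\<Sum>ys\<leftarrow>Ps. wk (\<lambda>_ _. True) Src ys a) \<le> g a"
    by blast
  have disj: "set (Ps!i) \<inter> set (Ps!j) \<subseteq> {Snk}" if ij: "i < length Ps" "j < length Ps" "i \<noteq> j" for i j
  proof
    fix x assume x: "x \<in> set (Ps!i) \<inter> set (Ps!j)"
    show "x \<in> {Snk}"
    proof (rule ccontr)
      assume xS: "x \<notin> {Snk}"
      have pi: "rtrancl_path (\<lambda>x y. (x,y) \<in> ?E) Src (Ps!i) Snk" "distinct (Src # Ps!i)"
        using Ps(2) ij(1) nth_mem by blast+
      have "set (Ps!i) \<subseteq> ?N" using path_in_N[OF mg pi(1)] .
      then have xI: "x \<in> ?I" using x xS pi(2) by auto
      have VP: "\<And>ys. ys \<in> set Ps \<Longrightarrow> set ys \<subseteq> ?N \<and> distinct (Src # ys)"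
        using Ps(2) path_in_N[OF mg] by meson
      have "inF ?N (\<lambda>a. \<Sum>ys\<leftarrow>Ps. wk (\<lambda>_ _. True) Src ys a) x \<le> inF ?N g x"
        unfolding inF_def by (rule sum_mono) (use Ps(3) in auto)
      also have "\<dots> \<le> 1" using cap xI by auto
      finally have le1: "(\<Sum>ys\<leftarrow>Ps. inF ?N (wk (\<lambda>_ _. True) Src ys) x) \<le> 1" by (simp add: inF_sum_list)
      have "(\<Sum>ys\<leftarrow>Ps. inF ?N (wk (\<lambda>_ _. True) Src ys) x) = (\<Sum>ys\<leftarrow>Ps. if x \<in> set ys then 1 else 0)"
        by (rule arg_cong[where f=sum_list], rule map_cong) (use VP inF_fwd[OF finite_nodes Src_in] in auto)
      also have "\<dots> = (\<Sum>l = 0..<length Ps. if x \<in> set (Ps!l) then 1 else 0)"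
        by (simp add: sum_list_sum_nth)
      finally have eq: "(\<Sum>ys\<leftarrow>Ps. inF ?N (wk (\<lambda>_ _. True) Src ys) x) = (\<Sum>l = 0..<length Ps. if x \<in> set (Ps!l) then 1 else 0)" .
      have "(\<Sum>l\<in>{i,j}. if x \<in> set (Ps!l) then 1 else (0::real)) \<le> (\<Sum>l = 0..<length Ps. if x \<in> set (Ps!l) then 1 else 0)"
        by (rule sum_mono2) (use ij in auto)
      moreover have "(\<Sum>l\<in>{i,j}. if x \<in> set (Ps!l) then 1 else (0::real)) = 2" using x ij(3) by auto
      ultimately show False using le1 eq by linarith
    qed
  qed
  show ?thesis using Ps(1,2) disj by blast
qed

abbreviation "rE m D B \<equiv> (\<lambda>x y. (x,y) \<in> flow_edges m D B)"

lemma parseR: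
  "rtrancl_path (rE m D B) (Rnd v x) zs Snk \<Longrightarrow>
   \<exists>q. zs = map (Rnd v) q @ [Snk] \<and> successively (\<lambda>a b. (a,b)\<in>D) (x#q) \<and> last (x#q) \<in> pa D v \<and> v < m"
proof (induction zs arbitrary: x)
  case Nil
  then show ?case by (auto elim: rtrancl_path.cases)
next
  case (Cons z zs)
  from Cons.prems have e: "(Rnd v x, z) \<in> flow_edges m D B" and p: "rtrancl_path (rE m D B) z zs Snk"
    by (auto elim: rtrancl_path.cases)
  from e have vm: "v < m" and cs: "(\<exists>u. z = Rnd v u \<and> (x,u)\<in>D) \<or> (z = Snk \<and> x \<in> pa D v)"
    unfolding E_Rnd by auto
  from cs show ?case
  proof
    assume "\<exists>u. z = Rnd v u \<and> (x,u)\<in>D"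
    then obtain u where u: "z = Rnd v u" "(x,u) \<in> D" by blast
    from Cons.IH[of u] p u obtain q where q: "zs = map (Rnd v) q @ [Snk]" "successively (\<lambda>a b. (a,b)\<in>D) (u#q)"
      "last (u#q) \<in> pa D v" by auto
    show ?case using q u vm by (intro exI[of _ "u#q"]) auto
  next
    assume zS: "z = Snk \<and> x \<in> pa D v"
    have "zs = []"
    proof (rule ccontr)
      assume "zs \<noteq> []"
      then obtain z' zs' where "zs = z' # zs'" by (cases zs) auto
      then have "(Snk, z') \<in> flow_edges m D B" using p zS by (auto elim: rtrancl_path.cases)
      then show False by (simp add: E_Snk)
    qed
    then show ?case using zS vm by (intro exI[of _ "[]"]) auto
  qed
qed

lemma parse:
  assumes "rtrancl_path (rE m D B) Src xs Snk"
  shows "\<exists>v y q. xs = Lnd {v,y} # map (Rnd v) q @ [Snk] \<and> q \<noteq> [] \<and> v<m \<and> y<m \<and> v\<noteq>y \<and> (v,y)\<notin>B \<and>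
     (hd q = y \<or> (y, hd q)\<in>B) \<and> successively (\<lambda>a b. (a,b)\<in>D) q \<and> last q \<in> pa D v"
proof -
  obtain z zs where xs: "xs = z # zs" using assms by (cases xs) (auto elim: rtrancl_path.cases)
  from assms xs have e1: "(Src, z) \<in> flow_edges m D B" and p1: "rtrancl_path (rE m D B) z zs Snk"
    by (auto elim: rtrancl_path.cases)
  from e1 obtain a b where z: "z = Lnd {a,b}" unfolding E_Src by auto
  obtain z' zs' where zs: "zs = z' # zs'" using p1 z by (cases zs) (auto elim: rtrancl_path.cases)
  from p1 zs have e2: "(z, z') \<in> flow_edges m D B" and p2: "rtrancl_path (rE m D B) z' zs' Snk"
    by (auto elim: rtrancl_path.cases)
  from e2 z have "\<exists>v w. {a,b} = {v,w} \<and> v<m \<and> w<m \<and> v\<noteq>w \<and> (v,w)\<notin>B \<and>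
    (z' = Rnd v w \<or> (\<exists>u. z' = Rnd v u \<and> (w,u)\<in>B))" by (simp only: E_Lnd)
  then obtain v w where "{a,b} = {v,w} \<and> v<m \<and> w<m \<and> v\<noteq>w \<and> (v,w)\<notin>B \<and>
    (z' = Rnd v w \<or> (\<exists>u. z' = Rnd v u \<and> (w,u)\<in>B))" by (elim exE)
  then have vw: "{a,b} = {v,w}" "v<m" "w<m" "v\<noteq>w" "(v,w)\<notin>B"
    "z' = Rnd v w \<or> (\<exists>u. z' = Rnd v u \<and> (w,u)\<in>B)" by simp_all
  obtain x where x: "z' = Rnd v x" "x = w \<or> (w,x) \<in> B" using vw(6) by blast
  from parseR[OF p2[unfolded x(1)]] obtain q where
    q: "zs' = map (Rnd v) q @ [Snk]" "successively (\<lambda>a b. (a,b)\<in>D) (x#q)" "last (x#q) \<in> pa D v" by blast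
  have xs': "xs = Lnd {v,w} # map (Rnd v) (x#q) @ [Snk]" using xs z zs x(1) q(1) vw(1) by simp
  have "hd (x#q) = w \<or> (w, hd (x#q)) \<in> B" using x(2) by simp
  then show ?thesis
    using xs' q(2,3) vw(2-5) by blast
qed

definition lay :: "fnode list \<Rightarrow> nat" where
  "lay xs = (case xs ! 1 of Rnd v _ \<Rightarrow> v | _ \<Rightarrow> 0)"
definition srcv :: "fnode list \<Rightarrow> nat" where
  "srcv xs = (case hd xs of Lnd S \<Rightarrow> the_elem (S - {lay xs}) | _ \<Rightarrow> 0)"
definition rq :: "fnode list \<Rightarrow> nat list" where
  "rq xs = map (\<lambda>z. case z of Rnd _ u \<Rightarrow> u | _ \<Rightarrow> 0) (butlast (tl xs))"
definition htk :: "fnode list \<Rightarrow> half_trek" where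
  "htk xs = (hd (rq xs) \<noteq> srcv xs, srcv xs, rq xs)"

lemma extr:
  assumes "xs = Lnd {v,y} # map (Rnd v) q @ [Snk]" "q \<noteq> []" "v \<noteq> y"
  shows "lay xs = v" "srcv xs = y" "rq xs = q"
proof -
  show l: "lay xs = v" using assms by (cases q) (auto simp: lay_def)
  have "{v,y} - {v} = {y}" using assms(3) by auto
  then show "srcv xs = y" using assms l by (simp add: srcv_def)
  show "rq xs = q" using assms by (simp add: rq_def comp_def)
qed

definition tgt :: "fnode list \<Rightarrow> nat" where "tgt ys = last (rq ys)"

definition good :: "nat \<Rightarrow> (nat \<times> nat) set \<Rightarrow> (nat \<times> nat) set \<Rightarrow> fnode list \<Rightarrow> bool" where
  "good m D B ys \<longleftrightarrow> ys = Lnd {lay ys, srcv ys} # map (Rnd (lay ys)) (rq ys) @ [Snk] \<and> rq ys \<noteq> [] \<and>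
     lay ys < m \<and> srcv ys < m \<and> lay ys \<noteq> srcv ys \<and> (lay ys, srcv ys) \<notin> B \<and>
     (hd (rq ys) = srcv ys \<or> (srcv ys, hd (rq ys)) \<in> B) \<and> successively (\<lambda>a b. (a,b)\<in>D) (rq ys) \<and>
     tgt ys \<in> pa D (lay ys)"

lemma good_path:
  assumes "rtrancl_path (rE m D B) Src ys Snk"
  shows "good m D B ys"
proof -
  obtain v y q where q: "ys = Lnd {v,y} # map (Rnd v) q @ [Snk]" "q \<noteq> []" "v<m" "y<m" "v\<noteq>y" "(v,y)\<notin>B"
     "hd q = y \<or> (y, hd q)\<in>B" "successively (\<lambda>a b. (a,b)\<in>D) q" "last q \<in> pa D v"
    using parse[OF assms] by blast
  note e = extr[OF q(1,2,5)]
  show ?thesis unfolding good_def tgt_def e using q by simp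
qed

lemma good_mem:
  assumes "good m D B ys"
  shows "Lnd {lay ys, srcv ys} \<in> set ys" "\<And>u. u \<in> set (rq ys) \<Longrightarrow> Rnd (lay ys) u \<in> set ys"
    "Rnd (lay ys) (tgt ys) \<in> set ys"
proof -
  have ys: "ys = Lnd {lay ys, srcv ys} # map (Rnd (lay ys)) (rq ys) @ [Snk]" "rq ys \<noteq> []"
    using assms by (simp_all add: good_def)
  show "Lnd {lay ys, srcv ys} \<in> set ys" by (subst ys(1)) simp
  show *: "\<And>u. u \<in> set (rq ys) \<Longrightarrow> Rnd (lay ys) u \<in> set ys" by (subst ys(1)) auto
  show "Rnd (lay ys) (tgt ys) \<in> set ys" using * ys(2) by (simp add: tgt_def)
qed

lemma family_from_paths:
  assumes mg: "mixed_graph m D B"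
    and len: "length Ps = card D"
    and pth: "\<forall>ys\<in>set Ps. rtrancl_path (rE m D B) Src ys Snk \<and> distinct (Src # ys)"
    and dj: "\<forall>i<length Ps. \<forall>j<length Ps. i \<noteq> j \<longrightarrow> set (Ps!i) \<inter> set (Ps!j) \<subseteq> {Snk}"
  shows "\<not> HTC_infinite_to_one m D B"
proof -
  have symB: "sym B" and Dsub: "D \<subseteq> {..<m} \<times> {..<m}" using mg by (auto simp: mixed_graph_def)
  have finD: "finite D" using Dsub finite_subset by blast
  have G: "good m D B ys" if "ys \<in> set Ps" for ys using pth that good_path by blast
  have uniq: "ys1 = ys2" if u: "ys1 \<in> set Ps" "ys2 \<in> set Ps" "z \<in> set ys1" "z \<in> set ys2" "z \<noteq> Snk" for ys1 ys2 z
  proof -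
    obtain i where i: "i < length Ps" "Ps!i = ys1" using u(1) by (auto simp: in_set_conv_nth)
    obtain j where j: "j < length Ps" "Ps!j = ys2" using u(2) by (auto simp: in_set_conv_nth)
    show ?thesis
    proof (cases "i = j")
      case True then show ?thesis using i j by simp
    next
      case False
      then have "set ys1 \<inter> set ys2 \<subseteq> {Snk}" using dj i j by blast
      then show ?thesis using u(3-5) by blast
    qed
  qed
  have dist: "distinct Ps"
    unfolding distinct_conv_nth
  proof (intro allI impI)
    fix i j assume ij: "i < length Ps" "j < length Ps" "i \<noteq> j"
    show "Ps!i \<noteq> Ps!j"
    proof
      assume eq: "Ps!i = Ps!j"
      have "Ps!i \<in> set Ps" using ij by simp
      then have "Lnd {lay (Ps!i), srcv (Ps!i)} \<in> set (Ps!i)" using G good_mem(1) by blast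
      moreover have "set (Ps!i) \<inter> set (Ps!j) \<subseteq> {Snk}" using dj ij by blast
      ultimately show False using eq by auto
    qed
  qed
  define \<Phi> where "\<Phi> ys = (tgt ys, lay ys)" for ys
  have img: "\<Phi> ` set Ps \<subseteq> D" using G by (auto simp: \<Phi>_def good_def pa_def)
  have inj: "inj_on \<Phi> (set Ps)"
  proof (rule inj_onI)
    fix ys1 ys2 assume a: "ys1 \<in> set Ps" "ys2 \<in> set Ps" "\<Phi> ys1 = \<Phi> ys2"
    have "Rnd (lay ys1) (tgt ys1) \<in> set ys1" "Rnd (lay ys2) (tgt ys2) \<in> set ys2"
      using G[OF a(1)] G[OF a(2)] good_mem(3) by auto
    then show "ys1 = ys2" using uniq[OF a(1,2)] a(3) by (auto simp: \<Phi>_def)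
  qed
  have "card (\<Phi> ` set Ps) = card D" using card_image[OF inj] distinct_card[OF dist] len by simp
  then have imgD: "\<Phi> ` set Ps = D" using card_subset_eq[OF finD img] by simp
  define Yf where "Yf v = srcv ` {ys \<in> set Ps. lay ys = v}" for v
  define L where "L v = filter (\<lambda>ys. lay ys = v) Ps" for v
  have setL: "set (L v) = {ys \<in> set Ps. lay ys = v}" for v by (auto simp: L_def)
  have distL: "distinct (L v)" for v using dist by (simp add: L_def)
  have injs: "inj_on srcv (set (L v))" for v
  proof (rule inj_onI)
    fix ys1 ys2 assume a: "ys1 \<in> set (L v)" "ys2 \<in> set (L v)" "srcv ys1 = srcv ys2"
    have b: "ys1 \<in> set Ps" "ys2 \<in> set Ps" "lay ys1 = v" "lay ys2 = v" using a setL by auto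
    have "Lnd {lay ys1, srcv ys1} \<in> set ys1" "Lnd {lay ys2, srcv ys2} \<in> set ys2"
      using G[OF b(1)] G[OF b(2)] good_mem(1) by auto
    then show "ys1 = ys2" using uniq[OF b(1,2)] a(3) b(3,4) by auto
  qed
  have injt: "inj_on tgt (set (L v))" for v
  proof (rule inj_onI)
    fix ys1 ys2 assume a: "ys1 \<in> set (L v)" "ys2 \<in> set (L v)" "tgt ys1 = tgt ys2"
    have b: "ys1 \<in> set Ps" "ys2 \<in> set Ps" "lay ys1 = v" "lay ys2 = v" using a setL by auto
    have "Rnd (lay ys1) (tgt ys1) \<in> set ys1" "Rnd (lay ys2) (tgt ys2) \<in> set ys2"
      using G[OF b(1)] G[OF b(2)] good_mem(3) by auto
    then show "ys1 = ys2" using uniq[OF b(1,2)] a(3) b(3,4) by auto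
  qed
  have dsrc: "distinct (map srcv (L v))" for v using distL injs by (simp add: distinct_map)
  have dtgt: "distinct (map tgt (L v))" for v using distL injt by (simp add: distinct_map)
  have Yset: "set (map srcv (L v)) = Yf v" for v by (simp add: Yf_def setL)
  have paset: "set (map tgt (L v)) = pa D v" for v
  proof
    show "set (map tgt (L v)) \<subseteq> pa D v" using G by (auto simp: setL good_def)
    show "pa D v \<subseteq> set (map tgt (L v))"
    proof
      fix w assume "w \<in> pa D v"
      then have "(w, v) \<in> \<Phi> ` set Ps" using imgD by (simp add: pa_def)
      then obtain ys where "ys \<in> set Ps" "tgt ys = w" "lay ys = v" by (auto simp: \<Phi>_def)
      then show "w \<in> set (map tgt (L v))" by (auto simp: setL)
    qed
  qed
  have HTCv: "HTC D B (Yf v) v" for v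
  proof -
    have c: "card (Yf v) = card (pa D v)"
      using distinct_card[OF dsrc[of v]] distinct_card[OF dtgt[of v]] Yset[of v] paset[of v] by simp
    have d: "Yf v \<inter> ({v} \<union> sib B v) = {}"
    proof -
      { fix y assume "y \<in> Yf v"
        then obtain ys where ys: "ys \<in> set Ps" "lay ys = v" "srcv ys = y" by (auto simp: Yf_def)
        then have "y \<noteq> v" "(v, y) \<notin> B" using G[OF ys(1)] by (auto simp: good_def)
        then have "y \<notin> {v} \<union> sib B v" using symB by (auto simp: sib_def sym_def) }
      then show ?thesis by blast
    qed
    define hs where "hs = map htk (L v)"
    have h1: "\<forall>h\<in>set hs. is_half_trek D B h"
      using G by (auto simp: hs_def htk_def is_half_trek_def setL good_def)
    have ms: "map ht_source hs = map srcv (L v)" by (simp add: hs_def htk_def ht_source_def)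
    have mt: "map ht_target hs = map tgt (L v)" by (simp add: hs_def htk_def ht_target_def tgt_def)
    have sided: "\<forall>i < length hs. \<forall>j < length hs. i \<noteq> j \<longrightarrow>
        ht_left (hs ! i) \<inter> ht_left (hs ! j) = {} \<and> ht_right (hs ! i) \<inter> ht_right (hs ! j) = {}"
    proof (intro allI impI conjI)
      fix i j assume ij: "i < length hs" "j < length hs" "i \<noteq> j"
      then have ij': "i < length (L v)" "j < length (L v)" by (auto simp: hs_def)
      have "srcv (L v ! i) \<noteq> srcv (L v ! j)" using dsrc[of v] ij' ij(3) by (metis length_map nth_eq_iff_index_eq nth_map)
      then show "ht_left (hs ! i) \<inter> ht_left (hs ! j) = {}" using ij' by (simp add: hs_def ht_left_def htk_def)
      show "ht_right (hs ! i) \<inter> ht_right (hs ! j) = {}"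
      proof (rule ccontr)
        assume "ht_right (hs ! i) \<inter> ht_right (hs ! j) \<noteq> {}"
        then obtain u where u: "u \<in> set (rq (L v ! i))" "u \<in> set (rq (L v ! j))"
          using ij' by (auto simp: hs_def ht_right_def htk_def)
        have m: "L v ! i \<in> set (L v)" "L v ! j \<in> set (L v)" using ij' by simp_all
        then have b: "L v ! i \<in> set Ps" "L v ! j \<in> set Ps" "lay (L v ! i) = v" "lay (L v ! j) = v"
          using setL by auto
        have "Rnd v u \<in> set (L v ! i)" "Rnd v u \<in> set (L v ! j)"
          using good_mem(2)[OF G[OF b(1)] u(1)] good_mem(2)[OF G[OF b(2)] u(2)] b(3,4) by auto
        then have "L v ! i = L v ! j" using uniq[OF b(1,2)] by auto
        then show False using distL[of v] ij' ij(3) by (simp add: nth_eq_iff_index_eq)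
      qed
    qed
    have "ht_system_no_sided D B (Yf v) (pa D v)"
      unfolding ht_system_no_sided_def
      using h1 ms mt dsrc[of v] dtgt[of v] Yset[of v] paset[of v] sided by (intro exI[of _ hs]) auto
    then show ?thesis using c d by (simp add: HTC_def)
  qed
  have sub: "Yf v \<subseteq> {..<m}" for v using G by (auto simp: Yf_def good_def)
  have nomut: "\<not> (v \<noteq> w \<and> v \<in> Yf w \<and> w \<in> Yf v)" for v w
  proof
    assume a: "v \<noteq> w \<and> v \<in> Yf w \<and> w \<in> Yf v"
    then obtain ys1 where y1: "ys1 \<in> set Ps" "lay ys1 = w" "srcv ys1 = v" by (auto simp: Yf_def)
    obtain ys2 where y2: "ys2 \<in> set Ps" "lay ys2 = v" "srcv ys2 = w" using a by (auto simp: Yf_def)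
    have "Lnd {w, v} \<in> set ys1" "Lnd {v, w} \<in> set ys2" using good_mem(1)[OF G[OF y1(1)]] good_mem(1)[OF G[OF y2(1)]] y1 y2 by auto
    then have "ys1 = ys2" using uniq[OF y1(1) y2(1)] by (auto simp: insert_commute)
    then show False using y1 y2 a by simp
  qed
  show ?thesis unfolding HTC_infinite_to_one_def
    using HTCv sub nomut by (intro notI) (drule spec[of _ Yf], metis)
qed

lemma succ_to_path: "successively r (x#xs) \<Longrightarrow> rtrancl_path r x xs (last (x#xs))"
proof (induction xs arbitrary: x)
  case Nil then show ?case by (simp add: rtrancl_path.base)
next
  case (Cons y ys)
  then have "r x y" "successively r (y#ys)" by simp_all
  then show ?case using Cons.IH by (simp add: rtrancl_path.step)
qed

lemma path_to_succ: "rtrancl_path r x xs z \<Longrightarrow> successively r (x#xs)"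
proof (induction rule: rtrancl_path.induct)
  case (base x) then show ?case by simp
next
  case (step x y ys z) then show ?case by (cases ys) auto
qed

lemma shortcut_ex:
  assumes "p \<noteq> []" "successively r p"
  shows "\<exists>p'. p' \<noteq> [] \<and> hd p' = hd p \<and> last p' = last p \<and> set p' \<subseteq> set p \<and> distinct p' \<and> successively r p'"
proof -
  obtain x xs where p: "p = x # xs" using assms(1) by (cases p) auto
  have "rtrancl_path r x xs (last p)" using succ_to_path assms(2) p by metis
  then obtain xs' where xs': "rtrancl_path r x xs' (last p)" "distinct (x # xs')" "set xs' \<subseteq> set xs"
    by (rule rtrancl_path_distinct)
  show ?thesis
    using xs' path_last[OF xs'(1)] path_to_succ[OF xs'(1)] p by (intro exI[of _ "x # xs'"]) auto
qed

definition SC :: "(nat \<times> nat) set \<Rightarrow> nat list \<Rightarrow> nat list" where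
  "SC D p = (SOME p'. p' \<noteq> [] \<and> hd p' = hd p \<and> last p' = last p \<and> set p' \<subseteq> set p \<and> distinct p' \<and>
      successively (\<lambda>a b. (a,b)\<in>D) p')"

lemma SC_prop:
  assumes "p \<noteq> []" "successively (\<lambda>a b. (a,b)\<in>D) p"
  shows "SC D p \<noteq> [] \<and> hd (SC D p) = hd p \<and> last (SC D p) = last p \<and> set (SC D p) \<subseteq> set p \<and>
     distinct (SC D p) \<and> successively (\<lambda>a b. (a,b)\<in>D) (SC D p)"
  unfolding SC_def by (rule someI_ex[OF shortcut_ex[OF assms]])

lemma pathR:
  "successively (\<lambda>a b. (a,b)\<in>D) (x#q) \<Longrightarrow> last (x#q) \<in> pa D v \<Longrightarrow> v < m \<Longrightarrow>
   rtrancl_path (rE m D B) (Rnd v x) (map (Rnd v) q @ [Snk]) Snk"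
proof (induction q arbitrary: x)
  case Nil
  then have "(Rnd v x, Snk) \<in> flow_edges m D B" by (simp add: E_Rnd)
  then show ?case by (simp add: rtrancl_path.step rtrancl_path.base)
next
  case (Cons y ys)
  then have "(Rnd v x, Rnd v y) \<in> flow_edges m D B" by (simp add: E_Rnd)
  moreover have "rtrancl_path (rE m D B) (Rnd v y) (map (Rnd v) ys @ [Snk]) Snk" using Cons by simp
  ultimately show ?case by (simp add: rtrancl_path.step)
qed

lemma inF_sum: "finite S \<Longrightarrow> inF V (\<lambda>a. \<Sum>i\<in>S. h i a) x = (\<Sum>i\<in>S. inF V (h i) x)"
  unfolding inF_def by (rule sum.swap)
lemma outF_sum: "finite S \<Longrightarrow> outF V (\<lambda>a. \<Sum>i\<in>S. h i a) x = (\<Sum>i\<in>S. outF V (h i) x)"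
  unfolding outF_def by (rule sum.swap)

definition htsys :: "(nat \<times> nat) set \<Rightarrow> (nat \<times> nat) set \<Rightarrow> nat set \<Rightarrow> nat set \<Rightarrow> half_trek list \<Rightarrow> bool" where
  "htsys D B X Y hs \<longleftrightarrow>
     (\<forall>h \<in> set hs. is_half_trek D B h) \<and>
     distinct (map ht_source hs) \<and> distinct (map ht_target hs) \<and>
     set (map ht_source hs) = X \<and> set (map ht_target hs) = Y \<and>
     (\<forall>i < length hs. \<forall>j < length hs. i \<noteq> j \<longrightarrow>
        ht_left (hs ! i) \<inter> ht_left (hs ! j) = {} \<and>
        ht_right (hs ! i) \<inter> ht_right (hs ! j) = {})"

lemma sum_le1:
  assumes "finite S" "\<And>a. a \<in> S \<Longrightarrow> \<phi> a \<in> {0, 1::real}" "\<And>a b. a \<in> S \<Longrightarrow> b \<in> S \<Longrightarrow> \<phi> a \<noteq> 0 \<Longrightarrow> \<phi> b \<noteq> 0 \<Longrightarrow> a = b"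
  shows "sum \<phi> S \<le> 1"
proof (cases "\<exists>a\<in>S. \<phi> a \<noteq> 0")
  case False then show ?thesis by simp
next
  case True
  then obtain a where a: "a \<in> S" "\<phi> a \<noteq> 0" by blast
  have "sum \<phi> S = \<phi> a + sum \<phi> (S - {a})" using assms(1) a(1) by (simp add: sum.remove)
  also have "sum \<phi> (S - {a}) = 0" using assms(3)[OF a(1) _ a(2)] by (intro sum.neutral) auto
  finally show ?thesis using assms(2)[OF a(1)] by auto
qed

lemma card_D_sum:
  assumes mg: "mixed_graph m D B"
  shows "card D = (\<Sum>v<m. card (pa D v))"
proof -
  have Dsub: "D \<subseteq> {..<m} \<times> {..<m}" using mg by (auto simp: mixed_graph_def)
  have e: "D = (\<lambda>(v,w). (w,v)) ` Sigma {..<m} (pa D)" using Dsub by (auto simp: pa_def image_iff)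
  have i: "inj_on (\<lambda>(v,w). (w,v)) (Sigma {..<m} (pa D))" by (auto simp: inj_on_def)
  have "card D = card (Sigma {..<m} (pa D))" by (subst e) (rule card_image[OF i])
  also have "\<dots> = (\<Sum>v<m. card (pa D v))"
  proof (rule card_SigmaI)
    show "finite {..<m}" by simp
    show "\<forall>a\<in>{..<m}. finite (pa D a)" using Dsub by (auto intro: finite_subset[of _ "{..<m}"] simp: pa_def)
  qed
  finally show ?thesis .
qed

lemma flow_from_family:
  assumes mg: "mixed_graph m D B"
    and sub: "\<forall>v<m. Yf v \<subseteq> {..<m}"
    and htc: "\<forall>v<m. HTC D B (Yf v) v"
    and nm: "\<forall>v<m. \<forall>w<m. \<not> (v \<noteq> w \<and> v \<in> Yf w \<and> w \<in> Yf v)"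
  shows "\<exists>f. is_flow m D B f \<and> flow_size m B f = real (card D)"
proof -
  let ?N = "flow_nodes m B" and ?E = "flow_edges m D B" and ?I = "intern m B"
  let ?T = "\<lambda>_ _. True"
  have symB: "sym B" using mg by (auto simp: mixed_graph_def)
  have "\<forall>v. \<exists>hs. v < m \<longrightarrow> htsys D B (Yf v) (pa D v) hs"
    using htc by (auto simp: HTC_def ht_system_no_sided_def htsys_def)
  then obtain H where H: "\<And>v. v < m \<Longrightarrow> htsys D B (Yf v) (pa D v) (H v)" by metis
  define S where "S = Sigma {..<m} (\<lambda>v. set (H v))"
  define FP where "FP v h = Lnd {v, ht_source h} # map (Rnd v) (SC D (snd (snd h))) @ [Snk]" for v h
  have finS: "finite S" unfolding S_def by auto
  have hp: "snd (snd h) \<noteq> [] \<and> successively (\<lambda>a b. (a,b)\<in>D) (snd (snd h)) \<and>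
     (if fst h then (ht_source h, hd (snd (snd h))) \<in> B else hd (snd (snd h)) = ht_source h) \<and>
     ht_source h \<in> Yf v \<and> last (snd (snd h)) \<in> pa D v \<and> v < m" if vh: "(v,h) \<in> S" for v h
  proof -
    have v: "v < m" "h \<in> set (H v)" using vh by (auto simp: S_def)
    have hs: "htsys D B (Yf v) (pa D v) (H v)" using H v(1) .
    have "is_half_trek D B h" using hs v(2) by (auto simp: htsys_def)
    moreover have "ht_source h \<in> Yf v" "ht_target h \<in> pa D v" using hs v(2) by (auto simp: htsys_def)
    ultimately show ?thesis using v(1) by (cases h) (auto simp: is_half_trek_def ht_source_def ht_target_def)
  qed
  have yprops: "ht_source h < m \<and> ht_source h \<noteq> v \<and> (v, ht_source h) \<notin> B" if vh: "(v,h) \<in> S" for v h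
  proof -
    have a: "ht_source h \<in> Yf v" "v < m" using hp[OF vh] by auto
    then have "ht_source h \<notin> {v} \<union> sib B v" using htc by (auto simp: HTC_def)
    then show ?thesis using a sub symB by (auto simp: sib_def sym_def)
  qed
  have pth: "rtrancl_path (rE m D B) Src (FP v h) Snk" if vh: "(v,h) \<in> S" for v h
  proof -
    let ?p = "snd (snd h)" and ?y = "ht_source h"
    have h1: "?p \<noteq> []" "successively (\<lambda>a b. (a,b)\<in>D) ?p" "last ?p \<in> pa D v" "v < m"
      "?y < m" "?y \<noteq> v" "(v, ?y) \<notin> B" "hd ?p = ?y \<or> (?y, hd ?p) \<in> B"
      using hp[OF vh] yprops[OF vh] by (auto split: if_splits)
    note sc = SC_prop[OF h1(1,2)]
    obtain x q where xq: "SC D ?p = x # q" using sc by (cases "SC D ?p") auto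
    have r: "rtrancl_path (rE m D B) (Rnd v x) (map (Rnd v) q @ [Snk]) Snk"
      by (rule pathR) (use sc xq h1 in auto)
    have e2: "(Lnd {v, ?y}, Rnd v x) \<in> ?E"
      unfolding E_Lnd using h1 sc xq by auto
    have e1: "(Src, Lnd {v, ?y}) \<in> ?E" unfolding E_Src using h1 by auto
    show ?thesis unfolding FP_def xq using e1 e2 r by (simp add: rtrancl_path.step)
  qed
  have dst: "distinct (Src # FP v h)" if vh: "(v,h) \<in> S" for v h
  proof -
    have "distinct (SC D (snd (snd h)))" using SC_prop hp[OF vh] by blast
    then show ?thesis by (auto simp: FP_def distinct_map inj_on_def)
  qed
  have memFP: "x = Lnd {v, ht_source h} \<or> (\<exists>u \<in> set (snd (snd h)). x = Rnd v u) \<or> x = Snk"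
    if vh: "(v,h) \<in> S" and x: "x \<in> set (FP v h)" for v h x
  proof -
    have "set (SC D (snd (snd h))) \<subseteq> set (snd (snd h))" using SC_prop hp[OF vh] by blast
    then show ?thesis using x by (auto simp: FP_def)
  qed
  have uniq: "(v,h) = (v',h')" if a: "(v,h) \<in> S" "(v',h') \<in> S" "x \<in> set (FP v h)" "x \<in> set (FP v' h')" "x \<noteq> Snk"
    for v h v' h' x
  proof -
    have vm: "v < m" "v' < m" "h \<in> set (H v)" "h' \<in> set (H v')" using a(1,2) by (auto simp: S_def)
    from memFP[OF a(1,3)] a(5) have c: "x = Lnd {v, ht_source h} \<or> (\<exists>u \<in> set (snd (snd h)). x = Rnd v u)" by auto
    from memFP[OF a(2,4)] a(5) have c': "x = Lnd {v', ht_source h'} \<or> (\<exists>u \<in> set (snd (snd h')). x = Rnd v' u)" by auto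
    from c show ?thesis
    proof
      assume xl: "x = Lnd {v, ht_source h}"
      then have xl': "x = Lnd {v', ht_source h'}" using c' by auto
      have eq: "{v, ht_source h} = {v', ht_source h'}" using xl xl' by simp
      have ne: "ht_source h \<noteq> v" "ht_source h' \<noteq> v'" using yprops[OF a(1)] yprops[OF a(2)] by auto
      show ?thesis
      proof (cases "v = v'")
        case True
        then have ss: "ht_source h = ht_source h'" using eq ne by (auto simp: doubleton_eq_iff)
        have "distinct (map ht_source (H v))" using H[OF vm(1)] by (simp add: htsys_def)
        then have "inj_on ht_source (set (H v))" by (simp add: distinct_map)
        then have "h = h'" using ss vm(3,4) True by (auto simp: inj_on_def)
        then show ?thesis using True by simp
      next
        case False
        then have "v = ht_source h'" "ht_source h = v'" using eq by (auto simp: doubleton_eq_iff)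
        moreover have "ht_source h \<in> Yf v" "ht_source h' \<in> Yf v'" using hp[OF a(1)] hp[OF a(2)] by auto
        ultimately show ?thesis using nm vm(1,2) False by auto
      qed
    next
      assume "\<exists>u \<in> set (snd (snd h)). x = Rnd v u"
      then obtain u where u: "u \<in> set (snd (snd h))" "x = Rnd v u" by blast
      then obtain u' where u': "u' \<in> set (snd (snd h'))" "x = Rnd v' u'" using c' by auto
      have vv: "v' = v" "u' = u" using u u' by auto
      have hs: "htsys D B (Yf v) (pa D v) (H v)" using H vm(1) .
      obtain i where i: "i < length (H v)" "H v ! i = h" using vm(3) by (auto simp: in_set_conv_nth)
      obtain j where j: "j < length (H v)" "H v ! j = h'" using vm(4) vv by (auto simp: in_set_conv_nth)
      have "i = j"
      proof (rule ccontr)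
        assume "i \<noteq> j"
        then have "ht_right h \<inter> ht_right h' = {}" using hs i j unfolding htsys_def by blast
        then show False using u(1) u'(1) vv by (auto simp: ht_right_def)
      qed
      then show ?thesis using i j vv by simp
    qed
  qed
  define f where "f a = (\<Sum>i\<in>S. wk ?T Src (FP (fst i) (snd i)) a)" for a
  have wv: "wk ?T Src (FP (fst i) (snd i)) a = 0 \<or> (wk ?T Src (FP (fst i) (snd i)) a = 1 \<and> a \<in> ?E)"
    if i: "i \<in> S" for i a
  proof -
    obtain v h where vh: "i = (v,h)" by (cases i)
    have p1: "rtrancl_path (rE m D B) Src (FP v h) Snk" "distinct (Src # FP v h)" using pth dst i vh by auto
    show ?thesis using wf_vals[OF p1, of ?T a] vh by (cases a) auto
  qed
  have Vp: "set (FP (fst i) (snd i)) \<subseteq> ?N" if "i \<in> S" for i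
    using path_in_N[OF mg pth] that by (cases i) auto
  have dp: "distinct (Src # FP (fst i) (snd i))" if "i \<in> S" for i using dst that by (cases i) auto
  have tl: "outF ?N (wk ?T Src (FP (fst i) (snd i))) x - inF ?N (wk ?T Src (FP (fst i) (snd i))) x
      = (if x = Src then 1 else 0) - (if x = Snk then 1 else 0)" if i: "i \<in> S" for i x
  proof -
    have "rtrancl_path (rE m D B) Src (FP (fst i) (snd i)) Snk" using pth i by (cases i) auto
    then have "last (Src # FP (fst i) (snd i)) = Snk" by (rule path_last)
    then show ?thesis using wf_tele[OF finite_nodes Src_in Vp[OF i], of ?T x] by simp
  qed
  have inw: "inF ?N (wk ?T Src (FP (fst i) (snd i))) x = (if x \<in> set (FP (fst i) (snd i)) then 1 else 0)"
    if i: "i \<in> S" for i x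
    using inF_fwd[OF finite_nodes Src_in Vp[OF i] dp[OF i]] .
  have c1: "\<forall>a. 0 \<le> f a"
  proof
    fix a show "0 \<le> f a" unfolding f_def
    proof (rule sum_nonneg)
      fix i assume "i \<in> S" then show "0 \<le> wk ?T Src (FP (fst i) (snd i)) a" using wv[of i a] by auto
    qed
  qed
  have c2: "\<forall>a. a \<notin> ?E \<longrightarrow> f a = 0"
  proof (intro allI impI)
    fix a assume a: "a \<notin> ?E"
    show "f a = 0" unfolding f_def
    proof (rule sum.neutral, rule ballI)
      fix i assume "i \<in> S" then show "wk ?T Src (FP (fst i) (snd i)) a = 0" using wv[of i a] a by auto
    qed
  qed
  have c3: "\<forall>x\<in>?I. inF ?N f x = outF ?N f x \<and> inF ?N f x \<le> 1"
  proof
    fix x assume x: "x \<in> ?I"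
    have io: "outF ?N f x - inF ?N f x = (\<Sum>i\<in>S. outF ?N (wk ?T Src (FP (fst i) (snd i))) x -
         inF ?N (wk ?T Src (FP (fst i) (snd i))) x)"
      unfolding f_def by (simp add: inF_sum outF_sum finS sum_subtractf)
    also have "\<dots> = 0" using tl x by (intro sum.neutral) auto
    finally have e: "inF ?N f x = outF ?N f x" by simp
    have "inF ?N f x = (\<Sum>i\<in>S. if x \<in> set (FP (fst i) (snd i)) then 1 else 0)"
      unfolding f_def by (simp add: inF_sum finS inw)
    also have "\<dots> \<le> 1"
    proof (rule sum_le1[OF finS])
      fix i j assume ij: "i \<in> S" "j \<in> S" "(if x \<in> set (FP (fst i) (snd i)) then 1 else (0::real)) \<noteq> 0"
        "(if x \<in> set (FP (fst j) (snd j)) then 1 else (0::real)) \<noteq> 0"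
      then show "i = j" using uniq[of "fst i" "snd i" "fst j" "snd j" x] x by (auto split: if_splits)
    qed auto
    finally show "inF ?N f x = outF ?N f x \<and> inF ?N f x \<le> 1" using e by simp
  qed
  have isf: "is_flow m D B f" unfolding is_flow_cflow cflow_def using c1 c2 c3 by blast
  have fs: "flow_size m B f = real (card S)"
  proof -
    have "flow_size m B f = (\<Sum>i\<in>S. outF ?N (wk ?T Src (FP (fst i) (snd i))) Src)"
      unfolding flow_size_fval f_def by (simp add: outF_sum finS)
    also have "\<dots> = (\<Sum>i\<in>S. 1)"
    proof (rule sum.cong)
      fix i assume i: "i \<in> S"
      have "Src \<notin> set (FP (fst i) (snd i))" using dp[OF i] by simp
      then show "outF ?N (wk ?T Src (FP (fst i) (snd i))) Src = 1" using tl[OF i, of Src] inw[OF i, of Src] by simp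
    qed simp
    finally show ?thesis by simp
  qed
  have "card S = (\<Sum>v<m. card (set (H v)))" unfolding S_def by (rule card_SigmaI) auto
  also have "\<dots> = (\<Sum>v<m. card (pa D v))"
  proof (rule sum.cong)
    fix v assume "v \<in> {..<m}"
    then have hs: "htsys D B (Yf v) (pa D v) (H v)" using H by simp
    then have d: "distinct (map ht_target (H v))" and st: "set (map ht_target (H v)) = pa D v" by (simp_all add: htsys_def)
    have "distinct (H v)" using d by (simp add: distinct_map)
    then show "card (set (H v)) = card (pa D v)" using distinct_card[OF d] distinct_card st by simp
  qed simp
  also have "\<dots> = card D" using card_D_sum[OF mg] by simp
  finally show ?thesis using isf fs by auto
qed

lemma zero_is_flow: "is_flow m D B (\<lambda>_. 0)"
  unfolding is_flow_cflow by (simp add: cflow_zero inF_def)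

lemma flow_size_bound:
  assumes "is_flow m D B f"
  shows "flow_size m B f \<le> real (card (flow_nodes m B))"
proof -
  let ?N = "flow_nodes m B"
  have cf: "cflow ?N (flow_edges m D B) Src Snk f" and cap: "\<forall>x\<in>intern m B. inF ?N f x \<le> 1"
    using assms unfolding is_flow_cflow by auto
  have "f (Src, w) \<le> 1" if w: "w \<in> ?N" for w
  proof (cases "w \<in> intern m B")
    case True
    have "f (Src, w) \<le> inF ?N f w" unfolding inF_def
      by (rule member_le_sum) (use cflow_nonneg[OF cf] Src_in finite_nodes in auto)
    moreover have "inF ?N f w \<le> 1" using cap True by blast
    ultimately show ?thesis by linarith
  next
    case False
    then have "w = Src \<or> w = Snk" using w by auto
    then have "(Src, w) \<notin> flow_edges m D B" by (auto simp: E_Src)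
    then show ?thesis using cflow_out[OF cf] by simp
  qed
  then have "flow_size m B f \<le> (\<Sum>w\<in>?N. 1)" unfolding flow_size_def by (intro sum_mono) auto
  then show ?thesis by simp
qed

theorem mainTheorem10:
  fixes m :: nat and D B :: "(nat \<times> nat) set"
  assumes "mixed_graph m D B"
  shows "HTC_infinite_to_one m D B \<longleftrightarrow> max_flow m D B < real (card D)"
proof -
  note mg = assms
  define FS where "FS = {flow_size m B f | f. is_flow m D B f}"
  have ne: "FS \<noteq> {}" using zero_is_flow unfolding FS_def by blast
  have bdd: "bdd_above FS" unfolding FS_def bdd_above_def using flow_size_bound by blast
  have mf: "max_flow m D B = Sup FS" by (simp add: max_flow_def FS_def)
  show ?thesis
  proof
    assume h: "HTC_infinite_to_one m D B"
    show "max_flow m D B < real (card D)"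
    proof (rule ccontr)
      assume "\<not> max_flow m D B < real (card D)"
      then have "real (card D) - 1 < Sup FS" using mf by simp
      then obtain x where "x \<in> FS" "real (card D) - 1 < x" using less_cSupD[OF ne] by blast
      then obtain f where f: "is_flow m D B f" "real (card D) - 1 < flow_size m B f" unfolding FS_def by blast
      obtain g where g: "is_flow m D B g" "\<forall>e. g e \<in> \<int>" "flow_size m B f \<le> flow_size m B g"
        using int_flow_exists[OF mg f(1)] by blast
      have "flow_size m B g \<in> \<int>" unfolding flow_size_def using g(2) by (intro Ints_sum) auto
      then obtain z where z: "flow_size m B g = of_int z" by (auto elim: Ints_cases)
      have "real (card D) - 1 < of_int z" using f(2) g(3) z by simp
      then have "int (card D) \<le> z" by linarith
      then have k: "real (card D) \<le> flow_size m B g" using z by simp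
      obtain Ps where Ps: "length Ps = card D"
        "\<forall>ys\<in>set Ps. rtrancl_path (\<lambda>x y. (x,y) \<in> flow_edges m D B) Src ys Snk \<and> distinct (Src # ys)"
        "\<forall>i<length Ps. \<forall>j<length Ps. i \<noteq> j \<longrightarrow> set (Ps!i) \<inter> set (Ps!j) \<subseteq> {Snk}"
        using paths_exist[OF mg g(1,2) k] by blast
      show False using family_from_paths[OF mg Ps] h by simp
    qed
  next
    assume lt: "max_flow m D B < real (card D)"
    show "HTC_infinite_to_one m D B"
    proof (rule ccontr)
      assume "\<not> HTC_infinite_to_one m D B"
      then obtain Yf where Yf: "\<forall>v<m. Yf v \<subseteq> {..<m}" "\<forall>v<m. HTC D B (Yf v) v"
        "\<forall>v<m. \<forall>w<m. \<not> (v \<noteq> w \<and> v \<in> Yf w \<and> w \<in> Yf v)"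
        unfolding HTC_infinite_to_one_def by blast
      obtain f where f: "is_flow m D B f" "flow_size m B f = real (card D)"
        using flow_from_family[OF mg Yf] by blast
      have "real (card D) \<in> FS" using f unfolding FS_def by force
      then have "real (card D) \<le> Sup FS" using bdd by (rule cSup_upper)
      then show False using lt mf by simp
    qed
  qed
qed

end
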